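(* Let $C$ be a ring of characteristic zero. For any non-empty set $X$, the free Baxter algebra $\text{Ш}_C(X)$ is not a noetherian algebra.
   Context: For a commutative $C$-algebra $A$ and $\lambda\in C$, the shuffle Baxter algebra $\text{Ш}_C(A)=\bigoplus_{k\in\mathbb{N}}A^{\otimes(k+1)}$ has product $(x_0\otimes x_1\otimes\cdots\otimes x_m)(y_0\otimes y_1\otimes\cdots\otimes y_n)=x_0y_0\otimes(\text{sum over mixable shuffles of } x_1\otimes\cdots\otimes x_m \text{ and } y_1\otimes\cdots\otimes y_n)$, where a mixable shuffle is a shuffle of the two words in which some adjacent pairs (an $x_i$ immediately followed by a $y_j$) are replaced by the product $x_iy_j$, each such merger contributing a factor $\lambda$; the Baxter operator is $P_A(x_0\otimes\cdots\otimes x_n)=\mathbf{1}_A\otimes x_0\otimes\cdots\otimes x_n$. It is the free Baxter $C$-algebra of weight $\lambda$ on $A$. For a set $X$, $\text{Ш}_C(X):=\text{Ш}_C(C[X])$ is the free Baxter $C$-algebra of weight $\lambda$ on $X$ (here $\lambda\in C$ arbitrary). *)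

theory Defs
  imports "HOL-Algebra.Ring_Divisibility" "HOL-Library.Multiset"
begin

text \<open>
  Concrete model of the shuffle Baxter algebra Sha_C(X) = Sha_C(C[X]).
  C[X] is the polynomial ring in commuting variables X over C; it is the free
  C-module on the monomials, i.e. finite multisets over X, with monomial product
  given by multiset sum.  Hence C[X]^{tensor (k+1)} is the free C-module on
  (k+1)-tuples of monomials, and Sha_C(X) = direct sum over k is the free C-module on
  non-empty lists of monomials.
\<close>

type_synonym 'x word = "'x multiset list"

definition sha_basis :: "'x set \<Rightarrow> 'x word set" where
  "sha_basis X = {w. w \<noteq> [] \<and> (\<forall>m\<in>set w. set_mset m \<subseteq> X)}"

text \<open>A mixable shuffle of two words is encoded by a pattern over L, R, B:
  L = next letter of the first word, R = next letter of the second word,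
  B = the next letter x_i of the first word immediately followed by the next
  letter y_j of the second word, merged into the product x_i y_j (factor lambda).\<close>

datatype mix_step = L | R | B

fun mix :: "mix_step list \<Rightarrow> 'x word \<Rightarrow> 'x word \<Rightarrow> 'x word" where
  "mix [] xs ys = []"
| "mix (L # p) (x # xs) ys = x # mix p xs ys"
| "mix (R # p) xs (y # ys) = y # mix p xs ys"
| "mix (B # p) (x # xs) (y # ys) = (x + y) # mix p xs ys"
| "mix _ _ _ = []"

definition mix_patterns :: "nat \<Rightarrow> nat \<Rightarrow> mix_step list set" where
  "mix_patterns m n = {p. count_list p L + count_list p B = m
                        \<and> count_list p R + count_list p B = n}"

text \<open>Coefficient of the basis word w in the product of basis words
  (x_0 x_1 ... x_m)(y_0 y_1 ... y_n) = x_0 y_0 (sum over mixable shuffles).\<close>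

definition basis_prod :: "'c::comm_ring_1 \<Rightarrow> 'x word \<Rightarrow> 'x word \<Rightarrow> 'x word \<Rightarrow> 'c" where
  "basis_prod lam u v w =
     (\<Sum>p\<in>{p \<in> mix_patterns (length u - 1) (length v - 1).
              (hd u + hd v) # mix p (tl u) (tl v) = w}.
        lam ^ count_list p B)"

definition supp :: "('x word \<Rightarrow> 'c::zero) \<Rightarrow> 'x word set" where
  "supp f = {w. f w \<noteq> 0}"

definition Sha :: "'c::comm_ring_1 \<Rightarrow> 'x set \<Rightarrow> ('x word \<Rightarrow> 'c) ring" where
  "Sha lam X = \<lparr>
     carrier = {f. finite (supp f) \<and> supp f \<subseteq> sha_basis X},
     monoid.mult = (\<lambda>f g w. \<Sum>u\<in>supp f. \<Sum>v\<in>supp g. f u * g v * basis_prod lam u v w),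
     one = (\<lambda>w. if w = [{#}] then 1 else 0),
     zero = (\<lambda>w. 0),
     add = (\<lambda>f g w. f w + g w) \<rparr>"

end

theory Submission
  imports Defs
begin


primrec qs :: "'c::comm_ring_1 \<Rightarrow> 'x word \<Rightarrow> 'x word \<Rightarrow> 'x word \<Rightarrow> 'c" where
  "qs lam v u [] = (if v = [] \<and> u = [] then 1 else 0)"
| "qs lam v u (z # w) =
     (if v \<noteq> [] \<and> hd v = z then qs lam (tl v) u w else 0)
   + (if u \<noteq> [] \<and> hd u = z then qs lam v (tl u) w else 0)
   + (if v \<noteq> [] \<and> u \<noteq> [] \<and> hd v + hd u = z then lam * qs lam (tl v) (tl u) w else 0)"

definition pre :: "'x multiset \<Rightarrow> ('x word \<Rightarrow> 'c::comm_ring_1) \<Rightarrow> 'x word \<Rightarrow> 'c" where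
  "pre c F = (\<lambda>w. case w of [] \<Rightarrow> 0 | z # w' \<Rightarrow> if z = c then F w' else 0)"

definition dl :: "'a \<Rightarrow> 'a \<Rightarrow> 'c::comm_ring_1" where
  "dl a = (\<lambda>w. if w = a then 1 else 0)"

lemma qs_Nil_left: "qs lam [] u w = dl u w"
  apply (induction w arbitrary: u)
   apply (simp add: dl_def)
  apply (case_tac u)
   apply (auto simp: dl_def)
  done

lemma qs_Nil_right: "qs lam v [] w = dl v w"
  apply (induction w arbitrary: v)
   apply (simp add: dl_def)
  apply (case_tac v)
   apply (auto simp: dl_def)
  done

lemma qs_comm: "qs lam v u w = qs lam u v w"
  by (induction w arbitrary: v u) (simp_all add: add.commute add.left_commute)

lemma qs_rec: "qs lam (x # xs) (y # ys) = (\<lambda>w. pre x (qs lam xs (y # ys)) w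
   + pre y (qs lam (x # xs) ys) w + lam * pre (x + y) (qs lam xs ys) w)"
  by (rule ext, case_tac w) (auto simp: pre_def)

abbreviation fs :: "('x word \<Rightarrow> 'c::zero) \<Rightarrow> bool" where
  "fs f \<equiv> finite (supp f)"

definition bil :: "('x word \<Rightarrow> 'x word \<Rightarrow> 'x word \<Rightarrow> 'c::comm_ring_1)
   \<Rightarrow> ('x word \<Rightarrow> 'c) \<Rightarrow> ('x word \<Rightarrow> 'c) \<Rightarrow> 'x word \<Rightarrow> 'c" where
  "bil b f g = (\<lambda>w. \<Sum>u\<in>supp f. \<Sum>v\<in>supp g. f u * g v * b u v w)"

lemma bil_eq:
  assumes "finite S" "supp f \<subseteq> S" "finite T" "supp g \<subseteq> T"
  shows "bil b f g w = (\<Sum>u\<in>S. \<Sum>v\<in>T. f u * g v * b u v w)"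
proof -
  have "bil b f g w = (\<Sum>u\<in>S. \<Sum>v\<in>supp g. f u * g v * b u v w)"
    unfolding bil_def
    by (rule sum.mono_neutral_left) (use assms in \<open>auto simp: supp_def\<close>)
  also have "\<dots> = (\<Sum>u\<in>S. \<Sum>v\<in>T. f u * g v * b u v w)"
    by (rule sum.cong[OF refl], rule sum.mono_neutral_left) (use assms in \<open>auto simp: supp_def\<close>)
  finally show ?thesis .
qed

lemma supp_bil: "supp (bil b f g) \<subseteq> (\<Union>u\<in>supp f. \<Union>v\<in>supp g. supp (b u v))"
proof
  fix w assume "w \<in> supp (bil b f g)"
  then have "(\<Sum>u\<in>supp f. \<Sum>v\<in>supp g. f u * g v * b u v w) \<noteq> 0"
    by (simp add: supp_def bil_def)
  then obtain u where "u \<in> supp f" "(\<Sum>v\<in>supp g. f u * g v * b u v w) \<noteq> 0"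
    by (meson sum.neutral)
  then obtain v where "v \<in> supp g" "f u * g v * b u v w \<noteq> 0"
    by (meson sum.neutral)
  then have "b u v w \<noteq> 0" by auto
  then show "w \<in> (\<Union>u\<in>supp f. \<Union>v\<in>supp g. supp (b u v))"
    using \<open>u \<in> supp f\<close> \<open>v \<in> supp g\<close> by (auto simp: supp_def)
qed

lemma fs_bil: "fs f \<Longrightarrow> fs g \<Longrightarrow> (\<And>u v. fs (b u v)) \<Longrightarrow> fs (bil b f g)"
  by (rule finite_subset[OF supp_bil]) auto

lemma supp_add: "supp (\<lambda>w. f w + g w) \<subseteq> supp f \<union> supp (g :: 'x word \<Rightarrow> 'c::comm_ring_1)"
  by (auto simp: supp_def)

lemma bil_add_left:
  assumes "fs f" "fs g" "fs h"
  shows "bil b (\<lambda>w. f w + g w) h w = bil b f h w + bil b g h w"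
proof -
  let ?S = "supp f \<union> supp g"
  have "bil b (\<lambda>w. f w + g w) h w = (\<Sum>u\<in>?S. \<Sum>v\<in>supp h. (f u + g u) * h v * b u v w)"
    by (rule bil_eq) (use assms supp_add in auto)
  also have "\<dots> = (\<Sum>u\<in>?S. \<Sum>v\<in>supp h. f u * h v * b u v w)
       + (\<Sum>u\<in>?S. \<Sum>v\<in>supp h. g u * h v * b u v w)"
    by (simp add: sum.distrib distrib_right)
  also have "\<dots> = bil b f h w + bil b g h w"
    by (subst (1 2) bil_eq[where S = ?S and T = "supp h"]) (use assms in auto)
  finally show ?thesis .
qed

lemma bil_add_right:
  assumes "fs f" "fs g" "fs h"
  shows "bil b h (\<lambda>w. f w + g w) w = bil b h f w + bil b h g w"
proof -
  let ?S = "supp f \<union> supp g"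
  have "bil b h (\<lambda>w. f w + g w) w = (\<Sum>u\<in>supp h. \<Sum>v\<in>?S. h u * (f v + g v) * b u v w)"
    by (rule bil_eq) (use assms supp_add in auto)
  also have "\<dots> = (\<Sum>u\<in>supp h. \<Sum>v\<in>?S. h u * f v * b u v w)
       + (\<Sum>u\<in>supp h. \<Sum>v\<in>?S. h u * g v * b u v w)"
    by (simp add: sum.distrib distrib_right distrib_left)
  also have "\<dots> = bil b h f w + bil b h g w"
    by (subst (1 2) bil_eq[where T = ?S and S = "supp h"]) (use assms in auto)
  finally show ?thesis .
qed

lemma supp_sm: "supp (\<lambda>w. c * f w) \<subseteq> supp (f :: 'x word \<Rightarrow> 'c::comm_ring_1)"
  by (auto simp: supp_def)

lemma bil_sm_left:
  assumes "fs f" "fs h"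
  shows "bil b (\<lambda>w. c * f w) h w = c * bil b f h w"
proof -
  have "bil b (\<lambda>w. c * f w) h w = (\<Sum>u\<in>supp f. \<Sum>v\<in>supp h. (c * f u) * h v * b u v w)"
    by (rule bil_eq) (use assms supp_sm in auto)
  also have "\<dots> = c * bil b f h w"
    by (simp add: bil_def sum_distrib_left mult_ac)
  finally show ?thesis .
qed

lemma bil_sm_right:
  assumes "fs f" "fs h"
  shows "bil b h (\<lambda>w. c * f w) w = c * bil b h f w"
proof -
  have "bil b h (\<lambda>w. c * f w) w = (\<Sum>u\<in>supp h. \<Sum>v\<in>supp f. h u * (c * f v) * b u v w)"
    by (rule bil_eq) (use assms supp_sm in auto)
  also have "\<dots> = c * bil b h f w"
    by (simp add: bil_def sum_distrib_left mult_ac)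
  finally show ?thesis .
qed

lemma supp_dl: "supp (dl a :: 'x word \<Rightarrow> 'c::comm_ring_1) \<subseteq> {a}"
  by (auto simp: supp_def dl_def)

lemma fs_dl: "fs (dl a)"
  using supp_dl finite_subset by blast

lemma bil_dl: "bil b (dl u) (dl v) = b u v"
proof
  fix w
  show "bil b (dl u) (dl v) w = b u v w"
    by (subst bil_eq[where S = "{u}" and T = "{v}"]) (auto simp: supp_dl, simp add: dl_def)
qed

lemma bil_dl_left:
  assumes "fs g"
  shows "bil b (dl u) g w = (\<Sum>v\<in>supp g. g v * b u v w)"
  by (subst bil_eq[where S = "{u}" and T = "supp g"]) (use assms supp_dl in auto, simp add: dl_def)

lemma bil_dl_right:
  assumes "fs g"
  shows "bil b g (dl v) w = (\<Sum>u\<in>supp g. g u * b u v w)"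
  by (subst bil_eq[where T = "{v}" and S = "supp g"]) (use assms supp_dl in auto, simp add: dl_def)

lemma bil_comm:
  assumes "\<And>u v. b u v = b v u"
  shows "bil b f g = bil b g f"
  unfolding bil_def by (rule ext, subst sum.swap) (simp add: assms mult_ac)



lemma swap4: "(\<Sum>t\<in>T. \<Sum>z\<in>Z. \<Sum>u\<in>U. \<Sum>v\<in>V. F t z u v) = (\<Sum>u\<in>U. \<Sum>v\<in>V. \<Sum>z\<in>Z. \<Sum>t\<in>T. F t z u v)"
proof -
  have "(\<Sum>t\<in>T. \<Sum>z\<in>Z. \<Sum>u\<in>U. \<Sum>v\<in>V. F t z u v) = (\<Sum>t\<in>T. \<Sum>u\<in>U. \<Sum>z\<in>Z. \<Sum>v\<in>V. F t z u v)"
    by (rule sum.cong[OF refl], rule sum.swap)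
  also have "\<dots> = (\<Sum>u\<in>U. \<Sum>t\<in>T. \<Sum>z\<in>Z. \<Sum>v\<in>V. F t z u v)"
    by (rule sum.swap)
  also have "\<dots> = (\<Sum>u\<in>U. \<Sum>t\<in>T. \<Sum>v\<in>V. \<Sum>z\<in>Z. F t z u v)"
    by (rule sum.cong[OF refl], rule sum.cong[OF refl], rule sum.swap)
  also have "\<dots> = (\<Sum>u\<in>U. \<Sum>v\<in>V. \<Sum>t\<in>T. \<Sum>z\<in>Z. F t z u v)"
    by (rule sum.cong[OF refl], rule sum.swap)
  also have "\<dots> = (\<Sum>u\<in>U. \<Sum>v\<in>V. \<Sum>z\<in>Z. \<Sum>t\<in>T. F t z u v)"
    by (rule sum.cong[OF refl], rule sum.cong[OF refl], rule sum.swap)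
  finally show ?thesis .
qed

lemma swap3: "(\<Sum>v\<in>V. \<Sum>z\<in>Z. \<Sum>s\<in>S. F v z s) = (\<Sum>s\<in>S. \<Sum>v\<in>V. \<Sum>z\<in>Z. F v z s)"
proof -
  have "(\<Sum>v\<in>V. \<Sum>z\<in>Z. \<Sum>s\<in>S. F v z s) = (\<Sum>v\<in>V. \<Sum>s\<in>S. \<Sum>z\<in>Z. F v z s)"
    by (rule sum.cong[OF refl], rule sum.swap)
  also have "\<dots> = (\<Sum>s\<in>S. \<Sum>v\<in>V. \<Sum>z\<in>Z. F v z s)"
    by (rule sum.swap)
  finally show ?thesis .
qed

lemma bil_assoc:
  assumes fsb: "\<And>u v. fs (b u v)"
    and basis: "\<And>u v z. bil b (b u v) (dl z) = bil b (dl u) (b v z)"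
    and f: "fs f" and g: "fs g" and h: "fs h"
  shows "bil b (bil b f g) h = bil b f (bil b g h)"
proof
  fix w
  define Sfg where "Sfg = (\<Union>u\<in>supp f. \<Union>v\<in>supp g. supp (b u v))"
  define Sgh where "Sgh = (\<Union>u\<in>supp g. \<Union>v\<in>supp h. supp (b u v))"
  have fSfg: "finite Sfg" and fSgh: "finite Sgh"
    using f g h fsb by (auto simp: Sfg_def Sgh_def)
  have bs1: "(\<Sum>t\<in>Sfg. b u v t * b t z w) = bil b (b u v) (dl z) w"
    if "u \<in> supp f" "v \<in> supp g" for u v z
  proof -
    from that have "supp (b u v) \<subseteq> Sfg" by (auto simp: Sfg_def)
    then show ?thesis
      by (subst bil_eq[where S = Sfg and T = "{z}"]) (use fSfg supp_dl in auto, simp add: dl_def)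
  qed
  have bs2: "(\<Sum>s\<in>Sgh. b v z s * b u s w) = bil b (dl u) (b v z) w"
    if "v \<in> supp g" "z \<in> supp h" for u v z
  proof -
    from that have "supp (b v z) \<subseteq> Sgh" by (auto simp: Sgh_def)
    then show ?thesis
      by (subst bil_eq[where S = "{u}" and T = Sgh]) (use fSgh supp_dl in auto, simp add: dl_def)
  qed
  have "bil b (bil b f g) h w = (\<Sum>t\<in>Sfg. \<Sum>z\<in>supp h. bil b f g t * h z * b t z w)"
    by (rule bil_eq) (use fSfg h supp_bil[of b f g] in \<open>auto simp: Sfg_def\<close>)
  also have "\<dots> = (\<Sum>t\<in>Sfg. \<Sum>z\<in>supp h. \<Sum>u\<in>supp f. \<Sum>v\<in>supp g. f u * g v * h z * (b u v t * b t z w))"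
    unfolding bil_def sum_distrib_right sum_distrib_left by (simp add: mult_ac)
  also have "\<dots> = (\<Sum>u\<in>supp f. \<Sum>v\<in>supp g. \<Sum>z\<in>supp h. f u * g v * h z * (\<Sum>t\<in>Sfg. b u v t * b t z w))"
    by (subst swap4) (simp add: sum_distrib_left)
  also have "\<dots> = (\<Sum>u\<in>supp f. \<Sum>v\<in>supp g. \<Sum>z\<in>supp h. f u * g v * h z * bil b (dl u) (b v z) w)"
    by (intro sum.cong refl) (simp add: bs1 basis)
  also have "\<dots> = (\<Sum>u\<in>supp f. \<Sum>v\<in>supp g. \<Sum>z\<in>supp h. f u * g v * h z * (\<Sum>s\<in>Sgh. b v z s * b u s w))"
    by (intro sum.cong refl) (simp add: bs2)
  also have "\<dots> = (\<Sum>u\<in>supp f. \<Sum>s\<in>Sgh. f u * (\<Sum>v\<in>supp g. \<Sum>z\<in>supp h. g v * h z * b v z s) * b u s w)"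
    apply (rule sum.cong[OF refl])
    apply (simp only: sum_distrib_left sum_distrib_right)
    apply (subst swap3)
    apply (simp add: mult_ac)
    done
  also have "\<dots> = bil b f (bil b g h) w"
    by (subst bil_eq[where S = "supp f" and T = Sgh])
       (use fSgh f supp_bil[of b g h] in \<open>auto simp: Sgh_def bil_def\<close>)
  finally show "bil b (bil b f g) h w = bil b f (bil b g h) w" .
qed


lemma supp_pre: "supp (pre x F) = Cons x ` supp F"
  apply (auto simp: supp_def pre_def split: list.splits)
  subgoal for w
    apply (cases w)
     apply simp
    apply (rename_tac a l)
    apply (drule_tac x=a in spec, drule_tac x=l in spec)
    apply (cases "a = x")
     apply auto
    done
  done

lemma fs_pre[simp]: "fs F \<Longrightarrow> fs (pre x F)"
  by (simp add: supp_pre)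

lemma fs_add[simp]: "fs f \<Longrightarrow> fs g \<Longrightarrow> fs (\<lambda>w. f w + (g w :: 'c::comm_ring_1))"
  by (rule finite_subset[OF supp_add]) auto

lemma fs_sm[simp]: "fs f \<Longrightarrow> fs (\<lambda>w. c * (f w :: 'c::comm_ring_1))"
  by (rule finite_subset[OF supp_sm])

lemma fs_dl'[simp]: "fs (dl a :: 'x word \<Rightarrow> 'c::comm_ring_1)"
  by (rule fs_dl)

lemma pre_add: "pre x (\<lambda>w. F w + G w) = (\<lambda>w. pre x F w + pre x G w)"
  by (rule ext) (auto simp: pre_def split: list.splits)

lemma pre_sm: "pre x (\<lambda>w. c * F w) = (\<lambda>w. c * pre x F w)"
  by (rule ext) (auto simp: pre_def split: list.splits)

lemma pre_dl: "pre x (dl u) = dl (x # u)"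
  by (rule ext) (auto simp: pre_def dl_def split: list.splits)

lemma qs_dec: "qs lam v u w = (if v = [] \<and> u = [] then dl [] w else 0)
   + (if v \<noteq> [] then pre (hd v) (qs lam (tl v) u) w else 0)
   + (if u \<noteq> [] then pre (hd u) (qs lam v (tl u)) w else 0)
   + (if v \<noteq> [] \<and> u \<noteq> [] then lam * pre (hd v + hd u) (qs lam (tl v) (tl u)) w else 0)"
  by (cases w) (auto simp: pre_def dl_def)

definition Lam :: "'x word \<Rightarrow> 'x word \<Rightarrow> 'x multiset set" where
  "Lam v u = (\<lambda>(a, b). a + b) ` (insert {#} (set v) \<times> insert {#} (set u))"

lemma Lam_mono: "set v' \<subseteq> set v \<Longrightarrow> set u' \<subseteq> set u \<Longrightarrow> Lam v' u' \<subseteq> Lam v u"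
  unfolding Lam_def by blast

lemma finite_Lam: "finite (Lam v u)"
  by (simp add: Lam_def)

lemma set_tl_sub: "set (tl v) \<subseteq> set v"
  by (cases v) auto

lemma qs_nz: "qs lam v u w \<noteq> 0 \<Longrightarrow> set w \<subseteq> Lam v u \<and> length w \<le> length v + length u"
proof (induction w arbitrary: v u)
  case Nil
  then show ?case by simp
next
  case (Cons z w)
  have "(v \<noteq> [] \<and> hd v = z \<and> qs lam (tl v) u w \<noteq> 0) \<or> (u \<noteq> [] \<and> hd u = z \<and> qs lam v (tl u) w \<noteq> 0)
     \<or> (v \<noteq> [] \<and> u \<noteq> [] \<and> hd v + hd u = z \<and> qs lam (tl v) (tl u) w \<noteq> 0)"
    using Cons.prems by (auto split: if_splits)
  then consider
      (a) "v \<noteq> []" "hd v = z" "qs lam (tl v) u w \<noteq> 0"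
    | (b) "u \<noteq> []" "hd u = z" "qs lam v (tl u) w \<noteq> 0"
    | (c) "v \<noteq> []" "u \<noteq> []" "hd v + hd u = z" "qs lam (tl v) (tl u) w \<noteq> 0"
    by blast
  then show ?case
  proof cases
    case a
    with Cons.IH[of "tl v" u] Lam_mono[OF set_tl_sub[of v], of u u]
    have "set w \<subseteq> Lam v u" "length w \<le> length (tl v) + length u" by auto
    moreover have "z \<in> Lam v u" using a unfolding Lam_def
      by (auto intro!: image_eqI[where x = "(hd v, {#})"])
    ultimately show ?thesis using a by (cases v) auto
  next
    case b
    with Cons.IH[of v "tl u"] Lam_mono[OF _ set_tl_sub[of u], of v v]
    have "set w \<subseteq> Lam v u" "length w \<le> length v + length (tl u)" by auto
    moreover have "z \<in> Lam v u" using b unfolding Lam_def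
      by (auto intro!: image_eqI[where x = "({#}, hd u)"])
    ultimately show ?thesis using b by (cases u) auto
  next
    case c
    with Cons.IH[of "tl v" "tl u"] Lam_mono[OF set_tl_sub[of v] set_tl_sub[of u]]
    have "set w \<subseteq> Lam v u" "length w \<le> length (tl v) + length (tl u)" by auto
    moreover have "z \<in> Lam v u" using c unfolding Lam_def
      by (auto intro!: image_eqI[where x = "(hd v, hd u)"])
    ultimately show ?thesis using c by (cases u; cases v) auto
  qed
qed

lemma fs_qs[simp]: "fs (qs lam v u)"
proof (rule finite_subset)
  show "supp (qs lam v u) \<subseteq> {w. set w \<subseteq> Lam v u \<and> length w \<le> length v + length u}"
    by (auto simp: supp_def dest: qs_nz)
  show "finite {w. set w \<subseteq> Lam v u \<and> length w \<le> length v + length u}"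
    by (rule finite_lists_length_le[OF finite_Lam])
qed


lemma sum_dl: "fs g \<Longrightarrow> (\<Sum>v\<in>supp g. g v * dl v w) = g w"
proof -
  assume g: "fs g"
  have "(\<Sum>v\<in>supp g. g v * dl v w) = (\<Sum>v\<in>supp g. if v = w then g v else 0)"
    by (rule sum.cong) (auto simp: dl_def)
  also have "\<dots> = g w"
    using g by (simp add: sum.delta) (auto simp: supp_def)
  finally show ?thesis .
qed

lemma bil_qs_Nil_left:
  assumes "fs g" shows "bil (qs lam) (dl []) g = g"
proof
  fix w
  have "bil (qs lam) (dl []) g w = (\<Sum>v\<in>supp g. g v * dl v w)"
    by (simp add: bil_dl_left[OF assms] qs_Nil_left)
  also have "\<dots> = g w"
    by (rule sum_dl[OF assms])
  finally show "bil (qs lam) (dl []) g w = g w" .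
qed

lemma bil_qs_Nil_right:
  assumes "fs g" shows "bil (qs lam) g (dl []) = g"
proof
  fix w
  have "bil (qs lam) g (dl []) w = (\<Sum>v\<in>supp g. g v * dl v w)"
    by (simp add: bil_dl_right[OF assms] qs_Nil_right)
  also have "\<dots> = g w"
    by (rule sum_dl[OF assms])
  finally show "bil (qs lam) g (dl []) w = g w" .
qed

lemma bil_pre_left:
  assumes "fs F" "fs G"
  shows "bil b (pre x F) G w = (\<Sum>u\<in>supp F. \<Sum>v\<in>supp G. F u * G v * b (x # u) v w)"
proof -
  have "bil b (pre x F) G w = (\<Sum>u\<in>Cons x ` supp F. \<Sum>v\<in>supp G. pre x F u * G v * b u v w)"
    by (simp add: bil_def supp_pre)
  also have "\<dots> = (\<Sum>u\<in>supp F. \<Sum>v\<in>supp G. F u * G v * b (x # u) v w)"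
    by (subst sum.reindex) (auto simp: inj_on_def pre_def)
  finally show ?thesis .
qed

lemma bil_pre_right:
  assumes "fs F" "fs G"
  shows "bil b G (pre y F) w = (\<Sum>u\<in>supp G. \<Sum>v\<in>supp F. G u * F v * b u (y # v) w)"
proof -
  have "bil b G (pre y F) w = (\<Sum>u\<in>supp G. \<Sum>v\<in>Cons y ` supp F. G u * pre y F v * b u v w)"
    by (simp add: bil_def supp_pre)
  also have "\<dots> = (\<Sum>u\<in>supp G. \<Sum>v\<in>supp F. G u * F v * b u (y # v) w)"
    by (rule sum.cong[OF refl], subst sum.reindex) (auto simp: inj_on_def pre_def)
  finally show ?thesis .
qed

lemma bil_pre_both:
  assumes "fs F" "fs G"
  shows "bil b (pre x F) (pre y G) w = (\<Sum>u\<in>supp F. \<Sum>v\<in>supp G. F u * G v * b (x # u) (y # v) w)"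
proof -
  have "bil b (pre x F) (pre y G) w = (\<Sum>u\<in>supp F. \<Sum>v\<in>supp (pre y G). F u * pre y G v * b (x # u) v w)"
    by (rule bil_pre_left) (use assms in auto)
  also have "\<dots> = (\<Sum>u\<in>supp F. \<Sum>v\<in>supp G. F u * G v * b (x # u) (y # v) w)"
    by (rule sum.cong[OF refl], simp add: supp_pre, subst sum.reindex) (auto simp: inj_on_def pre_def)
  finally show ?thesis .
qed

lemma pre_sum2: "pre x (\<lambda>w. \<Sum>u\<in>A. \<Sum>v\<in>A2. f u v * h u v w) w0 = (\<Sum>u\<in>A. \<Sum>v\<in>A2. f u v * pre x (h u v) w0)"
  by (cases w0) (auto simp: pre_def)

lemma T_pre:
  assumes "fs F" "fs G"
  shows "bil (qs lam) (pre x F) (pre y G) = (\<lambda>w. pre x (bil (qs lam) F (pre y G)) w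
     + pre y (bil (qs lam) (pre x F) G) w + lam * pre (x + y) (bil (qs lam) F G) w)"
proof
  fix w
  have e1: "bil (qs lam) F (pre y G) = (\<lambda>w. \<Sum>u\<in>supp F. \<Sum>v\<in>supp G. F u * G v * qs lam u (y # v) w)"
    by (rule ext, rule bil_pre_right) (use assms in auto)
  have e2: "bil (qs lam) (pre x F) G = (\<lambda>w. \<Sum>u\<in>supp F. \<Sum>v\<in>supp G. F u * G v * qs lam (x # u) v w)"
    by (rule ext, rule bil_pre_left) (use assms in auto)
  have e3: "bil (qs lam) F G = (\<lambda>w. \<Sum>u\<in>supp F. \<Sum>v\<in>supp G. F u * G v * qs lam u v w)"
    by (simp add: bil_def)
  have "bil (qs lam) (pre x F) (pre y G) w = (\<Sum>u\<in>supp F. \<Sum>v\<in>supp G. F u * G v * qs lam (x # u) (y # v) w)"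
    by (rule bil_pre_both) (use assms in auto)
  also have "\<dots> = (\<Sum>u\<in>supp F. \<Sum>v\<in>supp G. F u * G v * pre x (qs lam u (y # v)) w)
     + (\<Sum>u\<in>supp F. \<Sum>v\<in>supp G. F u * G v * pre y (qs lam (x # u) v) w)
     + lam * (\<Sum>u\<in>supp F. \<Sum>v\<in>supp G. F u * G v * pre (x + y) (qs lam u v) w)"
    by (simp add: qs_rec sum.distrib sum_distrib_left algebra_simps)
  also have "\<dots> = pre x (bil (qs lam) F (pre y G)) w
     + pre y (bil (qs lam) (pre x F) G) w + lam * pre (x + y) (bil (qs lam) F G) w"
    unfolding e1 e2 e3 pre_sum2 ..
  finally show "bil (qs lam) (pre x F) (pre y G) w = pre x (bil (qs lam) F (pre y G)) w
     + pre y (bil (qs lam) (pre x F) G) w + lam * pre (x + y) (bil (qs lam) F G) w" .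
qed

lemma fs_bilq[simp]: "fs F \<Longrightarrow> fs G \<Longrightarrow> fs (bil (qs lam) F G)"
  by (rule fs_bil) auto

lemma bil_add_left': "fs f \<Longrightarrow> fs g \<Longrightarrow> fs h \<Longrightarrow>
   bil b (\<lambda>w. f w + g w) h = (\<lambda>w. bil b f h w + bil b g h w)"
  by (rule ext, rule bil_add_left)

lemma bil_add_right': "fs f \<Longrightarrow> fs g \<Longrightarrow> fs h \<Longrightarrow>
   bil b h (\<lambda>w. f w + g w) = (\<lambda>w. bil b h f w + bil b h g w)"
  by (rule ext, rule bil_add_right)

lemma bil_sm_left': "fs f \<Longrightarrow> fs h \<Longrightarrow> bil b (\<lambda>w. c * f w) h = (\<lambda>w. c * bil b f h w)"
  by (rule ext, rule bil_sm_left)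

lemma bil_sm_right': "fs f \<Longrightarrow> fs h \<Longrightarrow> bil b h (\<lambda>w. c * f w) = (\<lambda>w. c * bil b h f w)"
  by (rule ext, rule bil_sm_right)


lemma tail_assoc:
  fixes lam :: "'c::comm_ring_1" and a b c :: "'x word"
  shows "bil (qs lam) (bil (qs lam) (dl a) (dl b)) (dl c) = bil (qs lam) (dl a) (bil (qs lam) (dl b) (dl c))"
proof (induction "length a + length b + length c" arbitrary: a b c rule: less_induct)
  case less
  show ?case
  proof (cases "a = [] \<or> b = [] \<or> c = []")
    case True
    then show ?thesis
      by (auto simp: bil_qs_Nil_left bil_qs_Nil_right)
  next
    case False
    then obtain x U y V z W where abc: "a = x # U" "b = y # V" "c = z # W"
      by (meson list.exhaust)
    let ?M = "bil (qs lam)"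
    let ?dU = "dl U :: 'x word \<Rightarrow> 'c" and ?dV = "dl V :: 'x word \<Rightarrow> 'c" and ?dW = "dl W :: 'x word \<Rightarrow> 'c"
    have IH: "?M (?M (dl a') (dl b')) (dl c') = ?M (dl a') (?M (dl b') (dl c'))"
      if "length a' + length b' + length c' < length a + length b + length c" for a' b' c' :: "'x word"
      using less that by blast
    have i1: "?M (?M ?dU (pre y ?dV)) (pre z ?dW) = ?M ?dU (?M (pre y ?dV) (pre z ?dW))"
      using IH[of U "y # V" "z # W"] by (simp add: abc pre_dl)
    have i2: "?M (?M ?dU (pre y ?dV)) ?dW = ?M ?dU (?M (pre y ?dV) ?dW)"
      using IH[of U "y # V" W] by (simp add: abc pre_dl)
    have i3: "?M (?M (pre x ?dU) ?dV) (pre z ?dW) = ?M (pre x ?dU) (?M ?dV (pre z ?dW))"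
      using IH[of "x # U" V "z # W"] by (simp add: abc pre_dl)
    have i4: "?M (?M (pre x ?dU) ?dV) ?dW = ?M (pre x ?dU) (?M ?dV ?dW)"
      using IH[of "x # U" V W] by (simp add: abc pre_dl)
    have i5: "?M (?M ?dU ?dV) (pre z ?dW) = ?M ?dU (?M ?dV (pre z ?dW))"
      using IH[of U V "z # W"] by (simp add: abc pre_dl)
    have i6: "?M (?M ?dU ?dV) ?dW = ?M ?dU (?M ?dV ?dW)"
      using IH[of U V W] by (simp add: abc)
    have i7: "?M (?M (pre x ?dU) (pre y ?dV)) ?dW = ?M (pre x ?dU) (?M (pre y ?dV) ?dW)"
      using IH[of "x # U" "y # V" W] by (simp add: abc pre_dl)
    have L: "?M (?M (pre x ?dU) (pre y ?dV)) (pre z ?dW) = (\<lambda>w.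
         pre x (?M (?M ?dU (pre y ?dV)) (pre z ?dW)) w
       + pre z (?M (?M (pre x ?dU) (pre y ?dV)) ?dW) w
       + lam * pre (x + z) (?M (?M ?dU (pre y ?dV)) ?dW) w
       + pre y (?M (?M (pre x ?dU) ?dV) (pre z ?dW)) w
       + lam * pre (y + z) (?M (?M (pre x ?dU) ?dV) ?dW) w
       + lam * pre (x + y) (?M (?M ?dU ?dV) (pre z ?dW)) w
       + lam * lam * pre (x + y + z) (?M (?M ?dU ?dV) ?dW) w)"
      by (simp add: T_pre bil_add_left' bil_sm_left' pre_add pre_sm fun_eq_iff algebra_simps)
    have R: "?M (pre x ?dU) (?M (pre y ?dV) (pre z ?dW)) = (\<lambda>w.
         pre x (?M ?dU (?M (pre y ?dV) (pre z ?dW))) w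
       + pre z (?M (pre x ?dU) (?M (pre y ?dV) ?dW)) w
       + lam * pre (x + z) (?M ?dU (?M (pre y ?dV) ?dW)) w
       + pre y (?M (pre x ?dU) (?M ?dV (pre z ?dW))) w
       + lam * pre (y + z) (?M (pre x ?dU) (?M ?dV ?dW)) w
       + lam * pre (x + y) (?M ?dU (?M ?dV (pre z ?dW))) w
       + lam * lam * pre (x + y + z) (?M ?dU (?M ?dV ?dW)) w)"
      by (simp add: T_pre bil_add_right' bil_sm_right' pre_add pre_sm fun_eq_iff algebra_simps)
    have "?M (?M (dl a) (dl b)) (dl c) = ?M (?M (pre x ?dU) (pre y ?dV)) (pre z ?dW)"
      by (simp add: abc pre_dl)
    also have "\<dots> = ?M (pre x ?dU) (?M (pre y ?dV) (pre z ?dW))"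
      unfolding L R i1 i2 i3 i4 i5 i6 i7 ..
    also have "\<dots> = ?M (dl a) (?M (dl b) (dl c))"
      by (simp add: abc pre_dl)
    finally show ?thesis .
  qed
qed


lemma UNIV_mix: "(UNIV :: mix_step set) = {L, R, B}"
  by (auto intro: mix_step.exhaust)

lemma length_counts: "length p = count_list p L + count_list p R + count_list p B"
  apply (induction p)
   apply simp
  apply (case_tac a)
    apply auto
  done

lemma finite_mix_patterns: "finite (mix_patterns m n)"
proof (rule finite_subset)
  show "mix_patterns m n \<subseteq> {p. set p \<subseteq> {L, R, B} \<and> length p \<le> m + n}"
    by (auto simp: mix_patterns_def length_counts UNIV_mix[symmetric])
  show "finite {p. set p \<subseteq> {L, R, B} \<and> length p \<le> m + n}"
    by (rule finite_lists_length_le) auto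
qed

definition PS :: "'x word \<Rightarrow> 'x word \<Rightarrow> 'x word \<Rightarrow> mix_step list set" where
  "PS xs ys t = {p \<in> mix_patterns (length xs) (length ys). mix p xs ys = t}"

lemma mp_Nil: "[] \<in> mix_patterns m n \<longleftrightarrow> m = 0 \<and> n = 0"
  by (auto simp: mix_patterns_def)

lemma mp_L: "L # p \<in> mix_patterns m n \<longleftrightarrow> m \<noteq> 0 \<and> p \<in> mix_patterns (m - 1) n"
  by (auto simp: mix_patterns_def)

lemma mp_R: "R # p \<in> mix_patterns m n \<longleftrightarrow> n \<noteq> 0 \<and> p \<in> mix_patterns m (n - 1)"
  by (auto simp: mix_patterns_def)

lemma mp_B: "B # p \<in> mix_patterns m n \<longleftrightarrow> m \<noteq> 0 \<and> n \<noteq> 0 \<and> p \<in> mix_patterns (m - 1) (n - 1)"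
  by (auto simp: mix_patterns_def)

lemma PS_Nil: "PS xs ys [] = (if xs = [] \<and> ys = [] then {[]} else {})"
proof -
  have "p \<in> PS xs ys [] \<longleftrightarrow> p = [] \<and> xs = [] \<and> ys = []" for p
  proof (cases p)
    case Nil then show ?thesis by (auto simp: PS_def mp_Nil)
  next
    case (Cons s p')
    then show ?thesis
      by (cases s; cases xs; cases ys) (auto simp: PS_def mp_L mp_R mp_B)
  qed
  then show ?thesis by auto
qed

lemma PS_Cons: "PS xs ys (z # t) =
    (if xs \<noteq> [] \<and> hd xs = z then Cons L ` PS (tl xs) ys t else {})
  \<union> (if ys \<noteq> [] \<and> hd ys = z then Cons R ` PS xs (tl ys) t else {})
  \<union> (if xs \<noteq> [] \<and> ys \<noteq> [] \<and> hd xs + hd ys = z then Cons B ` PS (tl xs) (tl ys) t else {})"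
proof -
  have "p \<in> PS xs ys (z # t) \<longleftrightarrow>
     (\<exists>p'. p = L # p' \<and> xs \<noteq> [] \<and> hd xs = z \<and> p' \<in> PS (tl xs) ys t)
   \<or> (\<exists>p'. p = R # p' \<and> ys \<noteq> [] \<and> hd ys = z \<and> p' \<in> PS xs (tl ys) t)
   \<or> (\<exists>p'. p = B # p' \<and> xs \<noteq> [] \<and> ys \<noteq> [] \<and> hd xs + hd ys = z \<and> p' \<in> PS (tl xs) (tl ys) t)" for p
  proof (cases p)
    case Nil then show ?thesis by (auto simp: PS_def)
  next
    case (Cons s p')
    then show ?thesis
      by (cases s; cases xs; cases ys) (auto simp: PS_def mp_L mp_R mp_B)
  qed
  then show ?thesis by (auto split: if_splits)
qed

lemma finite_PS: "finite (PS xs ys t)"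
  unfolding PS_def using finite_mix_patterns by auto

lemma sum_PS: "(\<Sum>p\<in>PS xs ys t. lam ^ count_list p B) = qs lam xs ys t"
proof (induction t arbitrary: xs ys)
  case Nil
  then show ?case by (simp add: PS_Nil)
next
  case (Cons z t)
  let ?f = "\<lambda>p. lam ^ count_list p B"
  let ?A1 = "(if xs \<noteq> [] \<and> hd xs = z then Cons L ` PS (tl xs) ys t else {})"
  let ?A2 = "(if ys \<noteq> [] \<and> hd ys = z then Cons R ` PS xs (tl ys) t else {})"
  let ?A3 = "(if xs \<noteq> [] \<and> ys \<noteq> [] \<and> hd xs + hd ys = z then Cons B ` PS (tl xs) (tl ys) t else {})"
  have fin: "finite ?A1" "finite ?A2" "finite ?A3" by (auto simp: finite_PS)
  have s1: "sum ?f ?A1 = (if xs \<noteq> [] \<and> hd xs = z then qs lam (tl xs) ys t else 0)"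
    by (auto simp: sum.reindex Cons.IH)
  have s2: "sum ?f ?A2 = (if ys \<noteq> [] \<and> hd ys = z then qs lam xs (tl ys) t else 0)"
    by (auto simp: sum.reindex Cons.IH)
  have s3: "sum ?f ?A3 = (if xs \<noteq> [] \<and> ys \<noteq> [] \<and> hd xs + hd ys = z then lam * qs lam (tl xs) (tl ys) t else 0)"
    by (auto simp: sum.reindex Cons.IH[symmetric] sum_distrib_left)
  have "sum ?f (PS xs ys (z # t)) = sum ?f (?A1 \<union> ?A2 \<union> ?A3)"
    by (simp only: PS_Cons)
  also have "\<dots> = sum ?f ?A1 + sum ?f ?A2 + sum ?f ?A3"
    by (subst sum.union_disjoint, use fin in auto, subst sum.union_disjoint, use fin in auto)
  also have "\<dots> = qs lam xs ys (z # t)"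
    by (simp only: s1 s2 s3 qs.simps)
  finally show ?case .
qed

lemma bp_eq: "basis_prod lam u v = pre (hd u + hd v) (qs lam (tl u) (tl v))"
proof
  fix w
  show "basis_prod lam u v w = pre (hd u + hd v) (qs lam (tl u) (tl v)) w"
  proof (cases w)
    case Nil
    then show ?thesis by (simp add: basis_prod_def pre_def)
  next
    case (Cons h t)
    have "{p \<in> mix_patterns (length u - 1) (length v - 1). (hd u + hd v) # mix p (tl u) (tl v) = w}
        = (if h = hd u + hd v then PS (tl u) (tl v) t else {})"
      by (auto simp: PS_def Cons)
    then show ?thesis
      by (simp add: basis_prod_def pre_def Cons sum_PS)
  qed
qed


lemma bil_assoc':
  assumes fsb: "\<And>u v. fs (b u v)"
    and basis: "\<And>u v z. u \<in> supp f \<Longrightarrow> v \<in> supp g \<Longrightarrow> z \<in> supp h \<Longrightarrow>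
        bil b (b u v) (dl z) = bil b (dl u) (b v z)"
    and f: "fs f" and g: "fs g" and h: "fs h"
  shows "bil b (bil b f g) h = bil b f (bil b g h)"
proof
  fix w
  define Sfg where "Sfg = (\<Union>u\<in>supp f. \<Union>v\<in>supp g. supp (b u v))"
  define Sgh where "Sgh = (\<Union>u\<in>supp g. \<Union>v\<in>supp h. supp (b u v))"
  have fSfg: "finite Sfg" and fSgh: "finite Sgh"
    using f g h fsb by (auto simp: Sfg_def Sgh_def)
  have bs1: "(\<Sum>t\<in>Sfg. b u v t * b t z w) = bil b (b u v) (dl z) w"
    if "u \<in> supp f" "v \<in> supp g" for u v z
  proof -
    from that have "supp (b u v) \<subseteq> Sfg" by (auto simp: Sfg_def)
    then show ?thesis
      by (subst bil_eq[where S = Sfg and T = "{z}"]) (use fSfg supp_dl in auto, simp add: dl_def)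
  qed
  have bs2: "(\<Sum>s\<in>Sgh. b v z s * b u s w) = bil b (dl u) (b v z) w"
    if "v \<in> supp g" "z \<in> supp h" for u v z
  proof -
    from that have "supp (b v z) \<subseteq> Sgh" by (auto simp: Sgh_def)
    then show ?thesis
      by (subst bil_eq[where S = "{u}" and T = Sgh]) (use fSgh supp_dl in auto, simp add: dl_def)
  qed
  have "bil b (bil b f g) h w = (\<Sum>t\<in>Sfg. \<Sum>z\<in>supp h. bil b f g t * h z * b t z w)"
    by (rule bil_eq) (use fSfg h supp_bil[of b f g] in \<open>auto simp: Sfg_def\<close>)
  also have "\<dots> = (\<Sum>t\<in>Sfg. \<Sum>z\<in>supp h. \<Sum>u\<in>supp f. \<Sum>v\<in>supp g. f u * g v * h z * (b u v t * b t z w))"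
    unfolding bil_def sum_distrib_right sum_distrib_left by (simp add: mult_ac)
  also have "\<dots> = (\<Sum>u\<in>supp f. \<Sum>v\<in>supp g. \<Sum>z\<in>supp h. f u * g v * h z * (\<Sum>t\<in>Sfg. b u v t * b t z w))"
    by (subst swap4) (simp add: sum_distrib_left)
  also have "\<dots> = (\<Sum>u\<in>supp f. \<Sum>v\<in>supp g. \<Sum>z\<in>supp h. f u * g v * h z * bil b (dl u) (b v z) w)"
    by (intro sum.cong refl) (simp add: bs1 basis)
  also have "\<dots> = (\<Sum>u\<in>supp f. \<Sum>v\<in>supp g. \<Sum>z\<in>supp h. f u * g v * h z * (\<Sum>s\<in>Sgh. b v z s * b u s w))"
    by (intro sum.cong refl) (simp add: bs2)
  also have "\<dots> = (\<Sum>u\<in>supp f. \<Sum>s\<in>Sgh. f u * (\<Sum>v\<in>supp g. \<Sum>z\<in>supp h. g v * h z * b v z s) * b u s w)"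
    apply (rule sum.cong[OF refl])
    apply (simp only: sum_distrib_left sum_distrib_right)
    apply (subst swap3)
    apply (simp add: mult_ac)
    done
  also have "\<dots> = bil b f (bil b g h) w"
    by (subst bil_eq[where S = "supp f" and T = Sgh])
       (use fSgh f supp_bil[of b g h] in \<open>auto simp: Sgh_def bil_def\<close>)
  finally show "bil b (bil b f g) h w = bil b f (bil b g h) w" .
qed

lemma Sha_carrier: "carrier (Sha lam X) = {f. fs f \<and> supp f \<subseteq> sha_basis X}"
  by (simp add: Sha_def)
lemma Sha_mult: "mult (Sha lam X) = bil (basis_prod lam)"
  by (simp add: Sha_def bil_def[abs_def] supp_def)
lemma Sha_one: "one (Sha lam X) = dl [{#}]"
  by (simp add: Sha_def dl_def[abs_def])
lemma Sha_zero: "zero (Sha lam X) = (\<lambda>w. 0)"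
  by (simp add: Sha_def)
lemma Sha_add: "add (Sha lam X) = (\<lambda>f g w. f w + g w)"
  by (simp add: Sha_def)

lemma fs_bp[simp]: "fs (basis_prod lam u v)"
  by (simp add: bp_eq)

lemma bp_comm: "basis_prod lam u v = basis_prod lam v u"
proof -
  have "qs lam (tl u) (tl v) = qs lam (tl v) (tl u)" by (rule ext) (rule qs_comm)
  moreover have "hd u + hd v = hd v + hd u" by (rule add.commute)
  ultimately show ?thesis by (simp only: bp_eq)
qed

lemma bil_bp_pre:
  assumes "fs P" "fs Q"
  shows "bil (basis_prod lam) (pre h P) (pre h' Q) = pre (h + h') (bil (qs lam) P Q)"
proof
  fix w
  have "bil (basis_prod lam) (pre h P) (pre h' Q) w = (\<Sum>u\<in>supp P. \<Sum>v\<in>supp Q. P u * Q v * pre (h + h') (qs lam u v) w)"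
    by (subst bil_pre_both) (use assms in \<open>auto simp: bp_eq\<close>)
  also have "\<dots> = pre (h + h') (bil (qs lam) P Q) w"
    by (simp add: bil_def[of "qs lam"] pre_sum2)
  finally show "bil (basis_prod lam) (pre h P) (pre h' Q) w = pre (h + h') (bil (qs lam) P Q) w" .
qed

lemma dl_nonempty: "z \<noteq> [] \<Longrightarrow> dl z = pre (hd z) (dl (tl z))"
  by (cases z) (simp_all add: pre_dl)

lemma bp_as_pre: "basis_prod lam u v = pre (hd u + hd v) (bil (qs lam) (dl (tl u)) (dl (tl v)))"
  by (simp add: bp_eq bil_dl)

lemma bp_basis_assoc:
  assumes "u \<noteq> []" "v \<noteq> []" "z \<noteq> []"
  shows "bil (basis_prod lam) (basis_prod lam u v) (dl z) = bil (basis_prod lam) (dl u) (basis_prod lam v z)"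
proof -
  have "bil (basis_prod lam) (basis_prod lam u v) (dl z)
      = pre (hd u + hd v + hd z) (bil (qs lam) (bil (qs lam) (dl (tl u)) (dl (tl v))) (dl (tl z)))"
    by (simp add: bp_as_pre dl_nonempty[OF assms(3)] bil_bp_pre)
  also have "\<dots> = pre (hd u + (hd v + hd z)) (bil (qs lam) (dl (tl u)) (bil (qs lam) (dl (tl v)) (dl (tl z))))"
    by (simp add: tail_assoc add.assoc)
  also have "\<dots> = bil (basis_prod lam) (dl u) (basis_prod lam v z)"
    by (simp add: bp_as_pre dl_nonempty[OF assms(1)] bil_bp_pre)
  finally show ?thesis .
qed


definition okw :: "'x set \<Rightarrow> 'x multiset set" where
  "okw X = {m. set_mset m \<subseteq> X}"

lemma Lam_okw: "set v \<subseteq> okw X \<Longrightarrow> set u \<subseteq> okw X \<Longrightarrow> Lam v u \<subseteq> okw X"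
  unfolding Lam_def okw_def by (auto; blast)

lemma sha_basis_okw: "w \<in> sha_basis X \<longleftrightarrow> w \<noteq> [] \<and> set w \<subseteq> okw X"
  by (auto simp: sha_basis_def okw_def)

lemma supp_bp_basis:
  assumes "u \<in> sha_basis X" "v \<in> sha_basis X"
  shows "supp (basis_prod lam u v) \<subseteq> sha_basis X"
proof
  fix w assume "w \<in> supp (basis_prod lam u v)"
  then obtain t where w: "w = (hd u + hd v) # t" and t: "qs lam (tl u) (tl v) t \<noteq> 0"
    by (auto simp: supp_def bp_eq pre_def split: list.splits if_splits)
  have tu: "set (tl u) \<subseteq> okw X" and tv: "set (tl v) \<subseteq> okw X" and hu: "hd u \<in> okw X" and hv: "hd v \<in> okw X"
    using assms by (auto simp: sha_basis_okw dest: set_tl_sub[THEN subsetD])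
  have "set t \<subseteq> okw X"
    using qs_nz[OF t] Lam_okw[OF tu tv] by blast
  moreover have "hd u + hd v \<in> okw X"
    using hu hv by (simp add: okw_def)
  ultimately have "set t \<subseteq> okw X" "hd u + hd v \<in> okw X" by auto
  then show "w \<in> sha_basis X" by (simp add: w sha_basis_okw)
qed

lemma carrier_mult:
  assumes "f \<in> carrier (Sha lam X)" "g \<in> carrier (Sha lam X)"
  shows "bil (basis_prod lam) f g \<in> carrier (Sha lam X)"
proof -
  have "fs (bil (basis_prod lam) f g)"
    using assms by (intro fs_bil) (auto simp: Sha_carrier)
  moreover have "supp (bil (basis_prod lam) f g) \<subseteq> sha_basis X"
    using supp_bil[of "basis_prod lam" f g] supp_bp_basis assms by (fastforce simp: Sha_carrier)
  ultimately show ?thesis by (simp add: Sha_carrier)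
qed

lemma bp_one_left: "v \<noteq> [] \<Longrightarrow> basis_prod lam [{#}] v = dl v"
  by (cases v) (simp_all add: bp_eq qs_Nil_left[abs_def] pre_dl)

lemma bp_one_right: "v \<noteq> [] \<Longrightarrow> basis_prod lam v [{#}] = dl v"
  by (cases v) (simp_all add: bp_eq qs_Nil_right[abs_def] pre_dl)

lemma Sha_add_closed:
  assumes "x \<in> carrier (Sha lam X)" "y \<in> carrier (Sha lam X)"
  shows "x \<oplus>\<^bsub>Sha lam X\<^esub> y \<in> carrier (Sha lam X)"
proof -
  have "supp (\<lambda>w. x w + y w) \<subseteq> supp x \<union> supp y" by (rule supp_add)
  then have "fs (\<lambda>w. x w + y w)" "supp (\<lambda>w. x w + y w) \<subseteq> sha_basis X"
    using assms by (auto simp: Sha_carrier intro: finite_subset)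
  then show ?thesis by (simp add: Sha_carrier Sha_add)
qed

lemma Sha_m_assoc:
  assumes xyz: "x \<in> carrier (Sha lam X)" "y \<in> carrier (Sha lam X)" "z \<in> carrier (Sha lam X)"
  shows "x \<otimes>\<^bsub>Sha lam X\<^esub> y \<otimes>\<^bsub>Sha lam X\<^esub> z = x \<otimes>\<^bsub>Sha lam X\<^esub> (y \<otimes>\<^bsub>Sha lam X\<^esub> z)"
proof -
  have ne: "w \<noteq> []" if "w \<in> supp x \<or> w \<in> supp y \<or> w \<in> supp z" for w
    using that xyz by (auto simp: Sha_carrier sha_basis_def)
  have "bil (basis_prod lam) (bil (basis_prod lam) x y) z = bil (basis_prod lam) x (bil (basis_prod lam) y z)"
  proof (rule bil_assoc')
    fix u v w assume "u \<in> supp x" "v \<in> supp y" "w \<in> supp z"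
    then show "bil (basis_prod lam) (basis_prod lam u v) (dl w) = bil (basis_prod lam) (dl u) (basis_prod lam v w)"
      using ne by (intro bp_basis_assoc) auto
  qed (use xyz in \<open>auto simp: Sha_carrier\<close>)
  then show ?thesis by (simp add: Sha_mult)
qed

lemma Sha_l_one:
  assumes x: "x \<in> carrier (Sha lam X)"
  shows "\<one>\<^bsub>Sha lam X\<^esub> \<otimes>\<^bsub>Sha lam X\<^esub> x = x"
proof
  fix w
  have fx: "fs x" using x by (simp add: Sha_carrier)
  have "bil (basis_prod lam) (dl [{#}]) x w = (\<Sum>v\<in>supp x. x v * basis_prod lam [{#}] v w)"
    by (rule bil_dl_left[OF fx])
  also have "\<dots> = (\<Sum>v\<in>supp x. x v * dl v w)"
  proof (rule sum.cong[OF refl])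
    fix v assume "v \<in> supp x"
    then have "v \<noteq> []" using x by (auto simp: Sha_carrier sha_basis_def)
    then show "x v * basis_prod lam [{#}] v w = x v * dl v w" by (simp add: bp_one_left)
  qed
  also have "\<dots> = x w" by (rule sum_dl[OF fx])
  finally show "(\<one>\<^bsub>Sha lam X\<^esub> \<otimes>\<^bsub>Sha lam X\<^esub> x) w = x w" by (simp add: Sha_mult Sha_one)
qed

lemma Sha_r_one:
  assumes x: "x \<in> carrier (Sha lam X)"
  shows "x \<otimes>\<^bsub>Sha lam X\<^esub> \<one>\<^bsub>Sha lam X\<^esub> = x"
proof
  fix w
  have fx: "fs x" using x by (simp add: Sha_carrier)
  have "bil (basis_prod lam) x (dl [{#}]) w = (\<Sum>v\<in>supp x. x v * basis_prod lam v [{#}] w)"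
    by (rule bil_dl_right[OF fx])
  also have "\<dots> = (\<Sum>v\<in>supp x. x v * dl v w)"
  proof (rule sum.cong[OF refl])
    fix v assume "v \<in> supp x"
    then have "v \<noteq> []" using x by (auto simp: Sha_carrier sha_basis_def)
    then show "x v * basis_prod lam v [{#}] w = x v * dl v w" by (simp add: bp_one_right)
  qed
  also have "\<dots> = x w" by (rule sum_dl[OF fx])
  finally show "(x \<otimes>\<^bsub>Sha lam X\<^esub> \<one>\<^bsub>Sha lam X\<^esub>) w = x w" by (simp add: Sha_mult Sha_one)
qed

lemma Sha_one_closed:
  fixes lam :: "'c::comm_ring_1" and X :: "'x set"
  shows "\<one>\<^bsub>Sha lam X\<^esub> \<in> carrier (Sha lam X)"
proof -
  have "supp (dl [{#}] :: 'x word \<Rightarrow> 'c) \<subseteq> {[{#}]}" by (rule supp_dl)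
  moreover have "[{#}] \<in> sha_basis X" by (simp add: sha_basis_def)
  ultimately have "fs (dl [{#}] :: 'x word \<Rightarrow> 'c)" "supp (dl [{#}] :: 'x word \<Rightarrow> 'c) \<subseteq> sha_basis X"
    by (auto intro: finite_subset)
  then show ?thesis by (simp add: Sha_carrier Sha_one)
qed

lemma Sha_neg_closed:
  assumes x: "x \<in> carrier (Sha lam X)"
  shows "(\<lambda>w. - x w) \<in> carrier (Sha lam X)"
proof -
  have "supp (\<lambda>w. - x w) = supp x" by (simp add: supp_def)
  then show ?thesis using x by (simp add: Sha_carrier)
qed

lemma ring_Sha: "ring (Sha lam X)"
proof (rule ringI)
  show "abelian_group (Sha lam X)"
  proof (rule abelian_groupI)
    show "\<And>x y. x \<in> carrier (Sha lam X) \<Longrightarrow> y \<in> carrier (Sha lam X) \<Longrightarrow> x \<oplus>\<^bsub>Sha lam X\<^esub> y \<in> carrier (Sha lam X)"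
      by (rule Sha_add_closed)
    show "\<zero>\<^bsub>Sha lam X\<^esub> \<in> carrier (Sha lam X)"
      by (simp add: Sha_carrier Sha_zero supp_def)
    show "\<And>x y z. (x \<oplus>\<^bsub>Sha lam X\<^esub> y) \<oplus>\<^bsub>Sha lam X\<^esub> z = x \<oplus>\<^bsub>Sha lam X\<^esub> (y \<oplus>\<^bsub>Sha lam X\<^esub> z)"
      by (simp add: Sha_add add.assoc)
    show "\<And>x y. x \<oplus>\<^bsub>Sha lam X\<^esub> y = y \<oplus>\<^bsub>Sha lam X\<^esub> x"
      by (simp add: Sha_add add.commute)
    show "\<And>x. \<zero>\<^bsub>Sha lam X\<^esub> \<oplus>\<^bsub>Sha lam X\<^esub> x = x"
      by (simp add: Sha_add Sha_zero)
    show "\<exists>y\<in>carrier (Sha lam X). y \<oplus>\<^bsub>Sha lam X\<^esub> x = \<zero>\<^bsub>Sha lam X\<^esub>"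
      if "x \<in> carrier (Sha lam X)" for x
    proof
      show "(\<lambda>w. - x w) \<oplus>\<^bsub>Sha lam X\<^esub> x = \<zero>\<^bsub>Sha lam X\<^esub>"
        by (simp add: Sha_add Sha_zero)
      show "(\<lambda>w. - x w) \<in> carrier (Sha lam X)" by (rule Sha_neg_closed[OF that])
    qed
  qed
next
  show "monoid (Sha lam X)"
  proof (rule monoidI)
    show "\<And>x y. x \<in> carrier (Sha lam X) \<Longrightarrow> y \<in> carrier (Sha lam X) \<Longrightarrow> x \<otimes>\<^bsub>Sha lam X\<^esub> y \<in> carrier (Sha lam X)"
      by (simp add: Sha_mult carrier_mult)
    show "\<one>\<^bsub>Sha lam X\<^esub> \<in> carrier (Sha lam X)" by (rule Sha_one_closed)
    show "\<And>x y z. x \<in> carrier (Sha lam X) \<Longrightarrow> y \<in> carrier (Sha lam X) \<Longrightarrow> z \<in> carrier (Sha lam X) \<Longrightarrow>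
       x \<otimes>\<^bsub>Sha lam X\<^esub> y \<otimes>\<^bsub>Sha lam X\<^esub> z = x \<otimes>\<^bsub>Sha lam X\<^esub> (y \<otimes>\<^bsub>Sha lam X\<^esub> z)"
      by (rule Sha_m_assoc)
    show "\<And>x. x \<in> carrier (Sha lam X) \<Longrightarrow> \<one>\<^bsub>Sha lam X\<^esub> \<otimes>\<^bsub>Sha lam X\<^esub> x = x"
      by (rule Sha_l_one)
    show "\<And>x. x \<in> carrier (Sha lam X) \<Longrightarrow> x \<otimes>\<^bsub>Sha lam X\<^esub> \<one>\<^bsub>Sha lam X\<^esub> = x"
      by (rule Sha_r_one)
  qed
next
  fix x y z assume xyz: "x \<in> carrier (Sha lam X)" "y \<in> carrier (Sha lam X)" "z \<in> carrier (Sha lam X)"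
  then have f: "fs x" "fs y" "fs z" by (auto simp: Sha_carrier)
  show "(x \<oplus>\<^bsub>Sha lam X\<^esub> y) \<otimes>\<^bsub>Sha lam X\<^esub> z = x \<otimes>\<^bsub>Sha lam X\<^esub> z \<oplus>\<^bsub>Sha lam X\<^esub> y \<otimes>\<^bsub>Sha lam X\<^esub> z"
    unfolding Sha_mult Sha_add by (rule bil_add_left'[OF f(1) f(2) f(3)])
  show "z \<otimes>\<^bsub>Sha lam X\<^esub> (x \<oplus>\<^bsub>Sha lam X\<^esub> y) = z \<otimes>\<^bsub>Sha lam X\<^esub> x \<oplus>\<^bsub>Sha lam X\<^esub> z \<otimes>\<^bsub>Sha lam X\<^esub> y"
    unfolding Sha_mult Sha_add by (rule bil_add_right'[OF f(1) f(2) f(3)])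
qed


lemma qs_take_Nil:
  assumes "i \<le> length v" "j \<le> length u"
  shows "qs lam (take i v) (take j u) [] = (if i = 0 \<and> j = 0 then 1 else 0)"
  using assms by auto

lemma qs_append:
  "qs lam v u (w1 @ w2) = (\<Sum>i\<le>length v. \<Sum>j\<le>length u.
      qs lam (take i v) (take j u) w1 * qs lam (drop i v) (drop j u) w2)"
proof (induction w1 arbitrary: v u)
  case Nil
  have pw: "qs lam (take i v) (take j u) [] * qs lam (drop i v) (drop j u) w2
      = (if j = 0 then (if i = 0 then qs lam v u w2 else 0) else 0)"
    if "i \<le> length v" "j \<le> length u" for i j
    using that by (cases "i = 0"; cases "j = 0") auto
  have "(\<Sum>i\<le>length v. \<Sum>j\<le>length u.
      qs lam (take i v) (take j u) [] * qs lam (drop i v) (drop j u) w2)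
     = (\<Sum>i\<le>length v. \<Sum>j\<le>length u. (if j = 0 then (if i = 0 then qs lam v u w2 else 0) else 0))"
    by (intro sum.cong refl) (rule pw; simp)
  also have "\<dots> = qs lam v u w2"
    by (simp add: sum.delta)
  finally show ?case by simp
next
  case (Cons z w1)
  show ?case
  proof (cases v)
    case Nil
    show ?thesis
    proof (cases u)
      case Nil
      then show ?thesis using \<open>v = []\<close> by simp
    next
      case (Cons b u')
      then show ?thesis using \<open>v = []\<close> Cons.IH[of "[]" u']
        apply (simp only: sum.atMost_Suc_shift length_Cons take_Suc_Cons drop_Suc_Cons take_0 drop_0 list.size(3))
        apply (cases "b = z")
        apply (simp_all add: sum.distrib sum_distrib_left distrib_right add_ac mult.assoc)
        done
    qed
  next
    case (Cons a v')
    show ?thesis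
    proof (cases u)
      case Nil
      then show ?thesis using \<open>v = a # v'\<close> Cons.IH[of v' "[]"]
        apply (simp only: sum.atMost_Suc_shift length_Cons take_Suc_Cons drop_Suc_Cons take_0 drop_0 list.size(3))
        apply (cases "a = z")
        apply (simp_all add: sum.distrib sum_distrib_left distrib_right add_ac mult.assoc)
        done
    next
      case (Cons b u')
      then show ?thesis using \<open>v = a # v'\<close> Cons.IH[of v' u] Cons.IH[of v u'] Cons.IH[of v' u']
        apply (simp only: sum.atMost_Suc_shift length_Cons take_Suc_Cons drop_Suc_Cons take_0 drop_0)
        apply (cases "a = z"; cases "b = z"; cases "a + b = z")
        apply (simp_all add: sum.distrib sum_distrib_left distrib_right add_ac mult.assoc)
        done
    qed
  qed
qed


definition pair :: "('x word \<Rightarrow> 'c::comm_ring_1) \<Rightarrow> ('x word \<Rightarrow> 'c) \<Rightarrow> 'c" where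
  "pair F c = (\<Sum>w\<in>supp F. F w * c w)"

definition conc :: "('x word \<Rightarrow> 'c::comm_ring_1) \<Rightarrow> ('x word \<Rightarrow> 'c) \<Rightarrow> 'x word \<Rightarrow> 'c" where
  "conc c d = (\<lambda>w. \<Sum>i\<le>length w. c (take i w) * d (drop i w))"

lemma pair_eq: "finite S \<Longrightarrow> supp F \<subseteq> S \<Longrightarrow> pair F c = (\<Sum>w\<in>S. F w * c w)"
  unfolding pair_def by (rule sum.mono_neutral_left) (auto simp: supp_def)

lemma inj_take_drop: "inj_on (\<lambda>(w, l). (take l w, drop l w)) (Sigma S (\<lambda>w. {..length w}))"
proof (rule inj_onI, clarsimp)
  fix w l w' l'
  assume "l \<le> length w" "l' \<le> length w'" "take l w = take l' w'" "drop l w = drop l' w'"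
  then have "w = w'" by (metis append_take_drop_id)
  moreover have "l = l'"
    using \<open>l \<le> length w\<close> \<open>l' \<le> length w'\<close> \<open>take l w = take l' w'\<close>
    by (metis length_take min.absorb2)
  ultimately show "w = w' \<and> l = l'" by simp
qed

lemma pair_conc:
  "pair (qs lam v u) (conc c d) = (\<Sum>i\<le>length v. \<Sum>j\<le>length u.
      pair (qs lam (take i v) (take j u)) c * pair (qs lam (drop i v) (drop j u)) d)"
proof -
  define S where "S = supp (qs lam v u)"
  define Sig where "Sig = Sigma S (\<lambda>w. {..length w})"
  define U where "U = (\<Union>i\<le>length v. \<Union>j\<le>length u. supp (qs lam (take i v) (take j u)) \<union> supp (qs lam (drop i v) (drop j u)))
      \<union> (\<lambda>(w, l). take l w) ` Sig \<union> (\<lambda>(w, l). drop l w) ` Sig"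
  have fS: "finite S" by (simp add: S_def)
  have fSig: "finite Sig" unfolding Sig_def using fS by auto
  have fU: "finite U" unfolding U_def using fSig by auto
  let ?phi = "\<lambda>(w, l). (take l w, drop l w)"
  let ?g = "\<lambda>p. qs lam v u (fst p @ snd p) * (c (fst p) * d (snd p))"
  have "pair (qs lam v u) (conc c d) = (\<Sum>w\<in>S. \<Sum>l\<le>length w. qs lam v u w * (c (take l w) * d (drop l w)))"
    by (simp add: pair_def conc_def S_def sum_distrib_left)
  also have "\<dots> = (\<Sum>(w, l)\<in>Sig. qs lam v u w * (c (take l w) * d (drop l w)))"
    unfolding Sig_def by (rule sum.Sigma) (use fS in auto)
  also have "\<dots> = (\<Sum>(w, l)\<in>Sig. ?g (?phi (w, l)))"
    by (rule sum.cong) auto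
  also have "\<dots> = sum ?g (?phi ` Sig)"
    by (subst sum.reindex) (auto simp: Sig_def inj_take_drop[unfolded split_def] split_def intro: sum.cong)
  also have "\<dots> = sum ?g (U \<times> U)"
  proof (rule sum.mono_neutral_left)
    show "finite (U \<times> U)" using fU by auto
    show "?phi ` Sig \<subseteq> U \<times> U" unfolding U_def by force
    show "\<forall>p\<in>U \<times> U - ?phi ` Sig. ?g p = 0"
    proof
      fix p assume p: "p \<in> U \<times> U - ?phi ` Sig"
      show "?g p = 0"
      proof (rule ccontr)
        assume "?g p \<noteq> 0"
        then have "fst p @ snd p \<in> S" by (auto simp: S_def supp_def)
        then have "(fst p @ snd p, length (fst p)) \<in> Sig" by (auto simp: Sig_def)
        then have "?phi (fst p @ snd p, length (fst p)) \<in> ?phi ` Sig" by blast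
        then show False using p by auto
      qed
    qed
  qed
  also have "\<dots> = (\<Sum>w1\<in>U. \<Sum>w2\<in>U. qs lam v u (w1 @ w2) * (c w1 * d w2))"
    by (simp add: sum.cartesian_product split_def)
  also have "\<dots> = (\<Sum>w1\<in>U. \<Sum>w2\<in>U. \<Sum>i\<le>length v. \<Sum>j\<le>length u.
      qs lam (take i v) (take j u) w1 * qs lam (drop i v) (drop j u) w2 * (c w1 * d w2))"
    by (simp add: qs_append sum_distrib_right)
  also have "\<dots> = (\<Sum>i\<le>length v. \<Sum>j\<le>length u. \<Sum>w2\<in>U. \<Sum>w1\<in>U.
      qs lam (take i v) (take j u) w1 * qs lam (drop i v) (drop j u) w2 * (c w1 * d w2))"
    by (rule swap4)
  also have "\<dots> = (\<Sum>i\<le>length v. \<Sum>j\<le>length u.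
      (\<Sum>w1\<in>U. qs lam (take i v) (take j u) w1 * c w1) * (\<Sum>w2\<in>U. qs lam (drop i v) (drop j u) w2 * d w2))"
    unfolding sum_product
    apply (rule sum.cong[OF refl])
    apply (rule sum.cong[OF refl])
    apply (subst sum.swap)
    apply (simp add: mult_ac)
    done
  also have "\<dots> = (\<Sum>i\<le>length v. \<Sum>j\<le>length u.
      pair (qs lam (take i v) (take j u)) c * pair (qs lam (drop i v) (drop j u)) d)"
  proof (intro sum.cong refl)
    fix i j assume "i \<in> {..length v}" "j \<in> {..length u}"
    then have "supp (qs lam (take i v) (take j u)) \<subseteq> U" "supp (qs lam (drop i v) (drop j u)) \<subseteq> U"
      unfolding U_def by blast+
    then show "(\<Sum>w1\<in>U. qs lam (take i v) (take j u) w1 * c w1) * (\<Sum>w2\<in>U. qs lam (drop i v) (drop j u) w2 * d w2)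
       = pair (qs lam (take i v) (take j u)) c * pair (qs lam (drop i v) (drop j u)) d"
      by (simp add: pair_eq[OF fU])
  qed
  finally show ?thesis .
qed


lemma pair_dl: "pair (dl a) c = c a"
  by (subst pair_eq[where S = "{a}"]) (auto simp: supp_dl, simp add: dl_def)

lemma qs_Nil_left_fun: "qs lam [] t = dl t"
  by (rule ext) (rule qs_Nil_left)

lemma qs_Nil_right_fun: "qs lam t [] = dl t"
  by (rule ext) (rule qs_Nil_right)

lemma pair_qs_Nil_left: "pair (qs lam [] t) c = c t"
  by (simp add: qs_Nil_left_fun pair_dl)

lemma pair_qs_Nil_right: "pair (qs lam t []) c = c t"
  by (simp add: qs_Nil_right_fun pair_dl)

lemma pair_add_fun:
  assumes "fs F" "fs G"
  shows "pair (\<lambda>w. F w + G w) c = pair F c + pair G c"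
proof -
  let ?S = "supp F \<union> supp G"
  have "pair (\<lambda>w. F w + G w) c = (\<Sum>w\<in>?S. (F w + G w) * c w)"
    by (rule pair_eq) (use assms supp_add in auto)
  also have "\<dots> = (\<Sum>w\<in>?S. F w * c w) + (\<Sum>w\<in>?S. G w * c w)"
    by (simp add: sum.distrib distrib_right)
  also have "\<dots> = pair F c + pair G c"
    by (subst (1 2) pair_eq[where S = ?S]) (use assms in auto)
  finally show ?thesis .
qed

lemma pair_sm_fun:
  assumes "fs F"
  shows "pair (\<lambda>w. k * F w) c = k * pair F c"
proof -
  have "pair (\<lambda>w. k * F w) c = (\<Sum>w\<in>supp F. (k * F w) * c w)"
    by (rule pair_eq) (use assms supp_sm in auto)
  also have "\<dots> = k * pair F c"
    by (simp add: pair_def sum_distrib_left mult_ac)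
  finally show ?thesis .
qed

lemma pair_pre:
  assumes "fs F"
  shows "pair (pre h F) c = pair F (\<lambda>w. c (h # w))"
proof -
  have "pair (pre h F) c = (\<Sum>w\<in>Cons h ` supp F. pre h F w * c w)"
    by (simp add: pair_def supp_pre)
  also have "\<dots> = pair F (\<lambda>w. c (h # w))"
    by (subst sum.reindex) (auto simp: pair_def pre_def)
  finally show ?thesis .
qed

lemma pair_diff2: "pair F (\<lambda>w. c w - d w) = pair F c - pair F d"
  by (simp add: pair_def right_diff_distrib sum_subtractf)

lemma pair_sm2: "pair F (\<lambda>w. k * c w) = k * pair F c"
  by (simp add: pair_def sum_distrib_left mult_ac)

lemma pair_zero2: "(\<And>w. F w \<noteq> 0 \<Longrightarrow> c w = 0) \<Longrightarrow> pair F c = 0"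
  by (simp add: pair_def supp_def)

lemma pair_zero2': "pair F (\<lambda>w. 0) = 0"
  by (simp add: pair_def)

lemma qs_Nil_Cons_fun: "qs lam [] (b # u) = pre b (qs lam [] u)"
  by (rule ext, subst qs_dec) simp

lemma qs_Cons_Nil_fun: "qs lam (a # v) [] = pre a (qs lam v [])"
  by (rule ext, subst qs_dec) simp

lemma pair_qs_rec:
  "pair (qs lam v u) c = (if v = [] \<and> u = [] then c [] else 0)
    + (if v \<noteq> [] then pair (qs lam (tl v) u) (\<lambda>w. c (hd v # w)) else 0)
    + (if u \<noteq> [] then pair (qs lam v (tl u)) (\<lambda>w. c (hd u # w)) else 0)
    + (if v \<noteq> [] \<and> u \<noteq> [] then lam * pair (qs lam (tl v) (tl u)) (\<lambda>w. c ((hd v + hd u) # w)) else 0)"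
proof (cases v)
  case Nil
  then show ?thesis
    by (cases u) (simp_all add: pair_qs_Nil_left qs_Nil_Cons_fun pair_pre)
next
  case (Cons a v')
  then show ?thesis
  proof (cases u)
    case Nil
    then show ?thesis using Cons by (simp add: qs_Cons_Nil_fun pair_pre)
  next
    case (Cons b u')
    then show ?thesis using \<open>v = a # v'\<close>
      by (simp add: qs_rec pair_add_fun pair_sm_fun pair_pre)
  qed
qed

definition ones :: "nat \<Rightarrow> 'x word" where
  "ones k = replicate k {#}"

definition gam :: "'c::comm_ring_1 \<Rightarrow> 'x word \<Rightarrow> 'c" where
  "gam lam w = (if set w \<subseteq> {{#}} then (- lam) ^ length w else 0)"

definition rho :: "'c::comm_ring_1 \<Rightarrow> nat \<Rightarrow> 'c" where
  "rho lam n = (if n = 0 then 1 else if n = 1 then lam else 0)"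

lemma ones_simps[simp]: "length (ones k) = k" "ones 0 = []" "ones (Suc k) = {#} # ones k"
  "take i (ones k) = ones (min i k)" "drop i (ones k) = ones (k - i)"
  "ones k = [] \<longleftrightarrow> k = 0"
  by (auto simp: ones_def)

lemma gam_Cons: "gam lam (z # w) = (if z = {#} then - lam * gam lam w else 0)"
  by (auto simp: gam_def)

lemma gam_Nil[simp]: "gam lam [] = 1"
  by (simp add: gam_def)

lemma pair_gam: "pair (qs lam (ones a) t) (gam lam) = (- lam) ^ a * gam lam t"
proof (induction "a + length t" arbitrary: a t rule: less_induct)
  case less
  show ?case
  proof (cases a)
    case 0
    then show ?thesis by (simp add: pair_qs_Nil_left)
  next
    case (Suc a')
    show ?thesis
    proof (cases t)
      case Nil
      then show ?thesis using Suc
        by (simp add: pair_qs_Nil_right gam_def ones_def set_replicate_conv_if)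
    next
      case (Cons y t')
      have IH1: "pair (qs lam (ones a') (y # t')) (gam lam) = (- lam) ^ a' * gam lam (y # t')"
        using less[of a' t] Suc Cons by simp
      have IH2: "pair (qs lam ({#} # ones a') t') (gam lam) = (- lam) ^ a * gam lam t'"
        using less[of a t'] Cons Suc by simp
      have IH3: "pair (qs lam (ones a') t') (gam lam) = (- lam) ^ a' * gam lam t'"
        using less[of a' t'] Suc Cons by simp
      have e: "pair (qs lam ({#} # ones a') (y # t')) (gam lam)
          = pair (qs lam (ones a') (y # t')) (\<lambda>w. - lam * gam lam w)
          + pair (qs lam ({#} # ones a') t') (\<lambda>w. gam lam (y # w))
          + lam * pair (qs lam (ones a') t') (\<lambda>w. gam lam (y # w))"
        by (subst pair_qs_rec) (simp add: gam_Cons)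
      show ?thesis
      proof (cases "y = {#}")
        case True
        have g: "(\<lambda>w. gam lam (y # w)) = (\<lambda>w. - lam * gam lam w)"
          using True by (simp add: gam_Cons)
        show ?thesis
          using e unfolding g pair_sm2 IH1 IH2 IH3 using Suc Cons True
          by (simp add: gam_Cons algebra_simps)
      next
        case False
        have g: "(\<lambda>w. gam lam (y # w)) = (\<lambda>w. 0)"
          using False by (simp add: gam_Cons)
        show ?thesis
          using e unfolding g pair_sm2 pair_zero2' IH1 using Suc Cons False
          by (simp add: gam_Cons)
      qed
    qed
  qed
qed


lemma sum_atMost_only0: "(\<And>i. 0 < i \<Longrightarrow> i \<le> n \<Longrightarrow> g i = 0) \<Longrightarrow> (\<Sum>i\<le>(n::nat). g i) = g 0"
  by (induction n) auto

lemma sum_atMost_onlylast: "(\<And>i. i < n \<Longrightarrow> g i = 0) \<Longrightarrow> (\<Sum>i\<le>(n::nat). g i) = g n"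
proof (cases n)
  case 0 then show ?thesis by simp
next
  case (Suc m)
  assume h: "\<And>i. i < n \<Longrightarrow> g i = 0"
  have "(\<Sum>i\<le>m. g i) = 0" using h Suc by (intro sum.neutral) auto
  then show ?thesis using Suc by simp
qed

lemma LS:
  assumes "\<And>p s. 1 < length p \<Longrightarrow> f p s = 0"
  shows "(\<Sum>i\<le>length t. f (take i t) (drop i t)) = f [] t + (if t = [] then 0 else f [hd t] (tl t))"
proof (cases t)
  case Nil then show ?thesis by simp
next
  case (Cons y t')
  have "(\<Sum>i\<le>length t'. f (y # take i t') (drop i t')) = f [y] t'"
  proof (subst sum_atMost_only0)
    fix i assume "0 < i" "i \<le> length t'"
    then show "f (y # take i t') (drop i t') = 0" by (intro assms) auto
  qed simp
  then show ?thesis using Cons by (simp del: sum.atMost_Suc add: sum.atMost_Suc_shift)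
qed

lemma drop_last: "t \<noteq> [] \<Longrightarrow> drop (length t - 1) t = [last t]"
  by (induction t) (auto simp: drop_Cons' split: if_splits)

lemma RS:
  assumes "\<And>p s. 1 < length s \<Longrightarrow> f p s = 0"
  shows "(\<Sum>i\<le>length t. f (take i t) (drop i t)) = f t [] + (if t = [] then 0 else f (butlast t) [last t])"
proof (cases "t = []")
  case True then show ?thesis by simp
next
  case False
  then obtain m where m: "length t = Suc m" by (cases t) auto
  have "(\<Sum>i\<le>m. f (take i t) (drop i t)) = f (take m t) (drop m t)"
  proof (rule sum_atMost_onlylast)
    fix i assume "i < m"
    then show "f (take i t) (drop i t) = 0" using m by (intro assms) auto
  qed
  moreover have "take m t = butlast t" using m by (simp add: butlast_conv_take)
  moreover have "drop m t = [last t]" using m drop_last[OF False] by simp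
  ultimately show ?thesis using m False by (simp add: add.commute)
qed

lemma conc_dl1_left: "conc (dl [a]) c t = (if t \<noteq> [] \<and> hd t = a then c (tl t) else 0)"
  unfolding conc_def by (subst LS) (auto simp: dl_def)

lemma conc_dl1_right: "conc c (dl [a]) t = (if t \<noteq> [] \<and> last t = a then c (butlast t) else 0)"
  unfolding conc_def by (subst RS) (auto simp: dl_def)

lemma qs_ones_single:
  "qs lam (ones i) u [z] = (if i = 1 \<and> u = [] \<and> z = {#} then 1 else 0) + (if u = [z] then rho lam i else 0)"
proof (cases i)
  case 0 then show ?thesis by (cases u) (auto simp: rho_def)
next
  case (Suc i')
  then show ?thesis
    by (cases i'; cases u) (auto simp: rho_def)
qed

definition good :: "'c::comm_ring_1 \<Rightarrow> ('x word \<Rightarrow> 'c) \<Rightarrow> bool" where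
  "good lam c \<longleftrightarrow> (\<forall>a t. 0 < a \<longrightarrow> pair (qs lam (ones a) t) c = 0)"

lemma pair_good: "good lam c \<Longrightarrow> pair (qs lam (ones a) t) c = (if a = 0 then c t else 0)"
  by (auto simp: good_def pair_qs_Nil_left)

lemma pair_conc_good_left:
  assumes "good lam c"
  shows "pair (qs lam (ones i) t) (conc e c) = (\<Sum>j\<le>length t. pair (qs lam (ones i) (take j t)) e * c (drop j t))"
proof -
  have "pair (qs lam (ones i) t) (conc e c) = (\<Sum>i1\<le>i. \<Sum>j\<le>length t.
      pair (qs lam (ones (min i1 i)) (take j t)) e * pair (qs lam (ones (i - i1)) (drop j t)) c)"
    by (simp add: pair_conc)
  also have "\<dots> = (\<Sum>j\<le>length t. pair (qs lam (ones (min i i)) (take j t)) e * pair (qs lam (ones (i - i)) (drop j t)) c)"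
    by (rule sum_atMost_onlylast) (simp add: pair_good[OF assms])
  finally show ?thesis by (simp add: pair_qs_Nil_left)
qed

lemma pair_conc_good_right:
  assumes "good lam c"
  shows "pair (qs lam (ones i) t) (conc c e) = (\<Sum>j\<le>length t. c (take j t) * pair (qs lam (ones i) (drop j t)) e)"
proof -
  have "pair (qs lam (ones i) t) (conc c e) = (\<Sum>i1\<le>i. \<Sum>j\<le>length t.
      pair (qs lam (ones (min i1 i)) (take j t)) c * pair (qs lam (ones (i - i1)) (drop j t)) e)"
    by (simp add: pair_conc)
  also have "\<dots> = (\<Sum>j\<le>length t. pair (qs lam (ones (min 0 i)) (take j t)) c * pair (qs lam (ones (i - 0)) (drop j t)) e)"
    by (rule sum_atMost_only0) (simp add: pair_good[OF assms])
  finally show ?thesis by (simp add: pair_qs_Nil_left)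
qed

lemma pair_dl_right:
  assumes "fs F" shows "pair F (dl a) = F a"
proof -
  have "pair F (dl a) = (\<Sum>w\<in>supp F. if w = a then F w else 0)"
    unfolding pair_def by (rule sum.cong) (auto simp: dl_def)
  also have "\<dots> = F a" using assms by (simp add: sum.delta) (auto simp: supp_def)
  finally show ?thesis .
qed

lemma pair_dl1: "pair (qs lam (ones i) p) (dl [z]) = qs lam (ones i) p [z]"
  by (rule pair_dl_right) simp

abbreviation d1 :: "'x word \<Rightarrow> 'c::comm_ring_1" where "d1 \<equiv> dl [{#}]"

definition Aop :: "('x word \<Rightarrow> 'c::comm_ring_1) \<Rightarrow> 'x word \<Rightarrow> 'c" where
  "Aop c = (\<lambda>w. conc d1 c w - conc c d1 w)"

lemma A_quasi:
  assumes "good lam c"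
  shows "pair (qs lam (ones i) t) (Aop c) = rho lam i * Aop c t"
proof -
  have L1: "pair (qs lam (ones i) t) (conc d1 c) = (if i = 1 then c t else 0)
      + (if t \<noteq> [] \<and> hd t = {#} then rho lam i * c (tl t) else 0)"
    unfolding pair_conc_good_left[OF assms] pair_dl1
    by (subst LS[where f = "\<lambda>p s. qs lam (ones i) p [{#}] * c s"]) (auto simp: qs_ones_single rho_def simp del: qs.simps)
  have R1: "pair (qs lam (ones i) t) (conc c d1) = (if i = 1 then c t else 0)
      + (if t \<noteq> [] \<and> last t = {#} then rho lam i * c (butlast t) else 0)"
    unfolding pair_conc_good_right[OF assms] pair_dl1
    by (subst RS[where f = "\<lambda>p s. c p * qs lam (ones i) s [{#}]"]) (auto simp: qs_ones_single rho_def simp del: qs.simps)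
  show ?thesis
    unfolding Aop_def pair_diff2 L1 R1
    by (simp add: conc_dl1_left conc_dl1_right algebra_simps)
qed

lemma rho_sum1: "0 < k \<Longrightarrow> (\<Sum>i\<le>k. (- lam) ^ i * rho lam (k - i)) = 0"
proof -
  assume "0 < k"
  then obtain m where k: "k = Suc m" by (cases k) auto
  show ?thesis
  proof (cases m)
    case 0 then show ?thesis using k by (simp add: rho_def)
  next
    case (Suc m')
    have "(\<Sum>i\<le>m'. (- lam) ^ i * rho lam (k - i)) = 0"
      using k Suc by (intro sum.neutral) (auto simp: rho_def)
    then show ?thesis using k Suc by (simp add: rho_def)
  qed
qed

lemma rho_sum2: "0 < k \<Longrightarrow> (\<Sum>i\<le>k. rho lam i * (- lam) ^ (k - i)) = 0"
proof -
  assume "0 < k"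
  then obtain m where k: "k = Suc m" by (cases k) auto
  show ?thesis
  proof (cases m)
    case 0 then show ?thesis using k by (simp add: rho_def)
  next
    case (Suc m')
    have "(\<Sum>i\<le>m'. rho lam (Suc (Suc i)) * (- lam) ^ (k - Suc (Suc i))) = 0"
      by (intro sum.neutral) (auto simp: rho_def)
    then show ?thesis using k Suc by (simp del: sum.atMost_Suc add: sum.atMost_Suc_shift rho_def)
  qed
qed


lemma sum_prod_split:
  fixes f g :: "_ \<Rightarrow> 'c::comm_ring_1"
  shows "(\<Sum>i\<in>A. \<Sum>j\<in>B2. f i * g j) = (\<Sum>i\<in>A. f i) * (\<Sum>j\<in>B2. g j)"
  by (rule sum_product[symmetric])

lemma good_base:
  fixes lam :: "'c::comm_ring_1" and xm :: "'x multiset"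
  assumes xm: "xm \<noteq> {#}"
  shows "good lam (conc (gam lam) (dl [xm]))"
  unfolding good_def
proof (intro allI impI)
  fix a :: nat and t :: "'x word"
  assume a: "0 < a"
  have "pair (qs lam (ones a) t) (conc (gam lam) (dl [xm])) = (\<Sum>i\<le>a. \<Sum>j\<le>length t.
      pair (qs lam (ones (min i a)) (take j t)) (gam lam) * pair (qs lam (ones (a - i)) (drop j t)) (dl [xm]))"
    by (simp add: pair_conc)
  also have "\<dots> = (\<Sum>i\<le>a. \<Sum>j\<le>length t. ((- lam) ^ i * rho lam (a - i)) *
      (gam lam (take j t) * (if drop j t = [xm] then 1 else 0)))"
    by (intro sum.cong refl) (simp add: pair_gam pair_dl1 qs_ones_single xm del: qs.simps)
  also have "\<dots> = (\<Sum>i\<le>a. (- lam) ^ i * rho lam (a - i)) * (\<Sum>j\<le>length t. gam lam (take j t) * (if drop j t = [xm] then 1 else 0))"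
    by (rule sum_prod_split)
  also have "\<dots> = 0" by (simp add: rho_sum1[OF a])
  finally show "pair (qs lam (ones a) t) (conc (gam lam) (dl [xm])) = 0" .
qed

lemma good_step:
  fixes lam :: "'c::comm_ring_1" and c :: "'x word \<Rightarrow> 'c"
  assumes g: "good lam c"
  shows "good lam (conc (Aop c) (gam lam))"
  unfolding good_def
proof (intro allI impI)
  fix a :: nat and t :: "'x word"
  assume a: "0 < a"
  have "pair (qs lam (ones a) t) (conc (Aop c) (gam lam)) = (\<Sum>i\<le>a. \<Sum>j\<le>length t.
      pair (qs lam (ones (min i a)) (take j t)) (Aop c) * pair (qs lam (ones (a - i)) (drop j t)) (gam lam))"
    by (simp add: pair_conc)
  also have "\<dots> = (\<Sum>i\<le>a. \<Sum>j\<le>length t. (rho lam i * (- lam) ^ (a - i)) * (Aop c (take j t) * gam lam (drop j t)))"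
    by (intro sum.cong refl) (simp add: A_quasi[OF g] pair_gam mult_ac)
  also have "\<dots> = (\<Sum>i\<le>a. rho lam i * (- lam) ^ (a - i)) * (\<Sum>j\<le>length t. Aop c (take j t) * gam lam (drop j t))"
    by (rule sum_prod_split)
  also have "\<dots> = 0" by (simp add: rho_sum2[OF a])
  finally show "pair (qs lam (ones a) t) (conc (Aop c) (gam lam)) = 0" .
qed

primrec cf :: "'c::comm_ring_1 \<Rightarrow> 'x multiset \<Rightarrow> nat \<Rightarrow> 'x word \<Rightarrow> 'c" where
  "cf lam xm 0 = conc (gam lam) (dl [xm])"
| "cf lam xm (Suc m) = conc (Aop (cf lam xm m)) (gam lam)"

lemma good_cf: "xm \<noteq> {#} \<Longrightarrow> good lam (cf lam xm m)"
  by (induction m) (auto intro: good_base good_step)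

lemma conc_nz: "conc c d w \<noteq> 0 \<Longrightarrow> \<exists>i\<le>length w. c (take i w) \<noteq> 0 \<and> d (drop i w) \<noteq> 0"
  unfolding conc_def by (metis (no_types, lifting) atMost_iff mult_not_zero sum.neutral)

lemma sum_list_take_drop: "sum_list (take i w) + sum_list (drop i w) = (sum_list w :: 'x multiset)"
  by (metis append_take_drop_id sum_list_append)

lemma gam_nz: "gam lam w \<noteq> 0 \<Longrightarrow> sum_list w = {#}"
proof -
  assume "gam lam w \<noteq> 0"
  then have "set w \<subseteq> {{#}}" by (auto simp: gam_def split: if_splits)
  then show "sum_list w = {#}" by (induction w) auto
qed

lemma Aop_nz:
  assumes "Aop c p \<noteq> 0"
    and IH: "\<And>w. c w \<noteq> 0 \<Longrightarrow> sum_list w = xm \<and> Suc m \<le> length w"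
  shows "sum_list p = xm \<and> Suc (Suc m) \<le> length p"
proof -
  from assms(1) have "conc d1 c p \<noteq> 0 \<or> conc c d1 p \<noteq> 0" by (auto simp: Aop_def)
  then show ?thesis
  proof
    assume "conc d1 c p \<noteq> 0"
    then have p: "p \<noteq> []" "hd p = {#}" "c (tl p) \<noteq> 0" by (auto simp: conc_dl1_left split: if_splits)
    then have "sum_list (tl p) = xm" "Suc m \<le> length (tl p)" using IH[OF p(3)] by auto
    then show ?thesis using p by (cases p) auto
  next
    assume "conc c d1 p \<noteq> 0"
    then have p: "p \<noteq> []" "last p = {#}" "c (butlast p) \<noteq> 0" by (auto simp: conc_dl1_right split: if_splits)
    then have "sum_list (butlast p) = xm" "Suc m \<le> length (butlast p)" using IH[OF p(3)] by auto
    moreover have "sum_list p = sum_list (butlast p) + last p"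
      using p by (metis append_butlast_last_id sum_list_append sum_list_simps add.right_neutral)
    ultimately show ?thesis using p by auto
  qed
qed

lemma cf_nz: "cf lam xm m w \<noteq> 0 \<Longrightarrow> sum_list w = xm \<and> Suc m \<le> length w"
proof (induction m arbitrary: w)
  case 0
  then have "conc (gam lam) (dl [xm]) w \<noteq> 0" by simp
  then obtain i where i: "i \<le> length w" "gam lam (take i w) \<noteq> 0" "dl [xm] (drop i w) \<noteq> (0::'a)"
    using conc_nz by blast
  then have d: "drop i w = [xm]" by (auto simp: dl_def split: if_splits)
  have "sum_list (take i w) = {#}" using gam_nz[OF i(2)] .
  then have "sum_list w = xm" using sum_list_take_drop[of i w] d by simp
  moreover have "Suc 0 \<le> length w"
  proof -
    have "length (drop i w) = 1" using d by simp
    then show ?thesis by simp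
  qed
  ultimately show ?case by simp
next
  case (Suc m)
  then have "conc (Aop (cf lam xm m)) (gam lam) w \<noteq> 0" by simp
  then obtain i where i: "i \<le> length w" "Aop (cf lam xm m) (take i w) \<noteq> 0" "gam lam (drop i w) \<noteq> 0"
    using conc_nz by blast
  have "sum_list (take i w) = xm \<and> Suc (Suc m) \<le> length (take i w)"
    by (rule Aop_nz[OF i(2)]) (rule Suc.IH)
  moreover have "sum_list (drop i w) = {#}" using gam_nz[OF i(3)] .
  ultimately show ?case using sum_list_take_drop[of i w] by auto
qed

lemma Aop_cf_len: "Aop (cf lam xm m) p \<noteq> 0 \<Longrightarrow> Suc (Suc m) \<le> length p"
  using Aop_nz[of "cf lam xm m" p xm m] cf_nz by blast

lemma cf_short: "length w \<le> m \<Longrightarrow> cf lam xm m w = 0"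
  using cf_nz[of lam xm m w] by fastforce

lemma butlast_xm_ones: "butlast (xm # ones (Suc m)) = xm # ones m"
  unfolding ones_def by (induction m) auto

lemma last_xm_ones: "last (xm # ones (Suc m)) = {#}"
  by (simp add: ones_def)

lemma cf_val:
  fixes lam :: "'c::comm_ring_1"
  assumes xm: "xm \<noteq> {#}"
  shows "cf lam xm m (xm # ones m) = (- 1) ^ m"
proof (induction m)
  case 0
  show ?case using xm by (simp add: conc_def dl_def gam_def)
next
  case (Suc m)
  let ?w = "xm # ones (Suc m)"
  have "cf lam xm (Suc m) ?w = (\<Sum>i\<le>length ?w. Aop (cf lam xm m) (take i ?w) * gam lam (drop i ?w))"
    by (simp add: conc_def)
  also have "\<dots> = Aop (cf lam xm m) (take (length ?w) ?w) * gam lam (drop (length ?w) ?w)"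
  proof (rule sum_atMost_onlylast)
    fix i assume "i < length ?w"
    then have "length (take i ?w) < Suc (Suc m)" by simp
    then have "Aop (cf lam xm m) (take i ?w) = 0" using Aop_cf_len by fastforce
    then show "Aop (cf lam xm m) (take i ?w) * gam lam (drop i ?w) = 0" by simp
  qed
  also have "\<dots> = Aop (cf lam xm m) ?w" by simp
  also have "\<dots> = - cf lam xm m (xm # ones m)"
    unfolding Aop_def conc_dl1_left conc_dl1_right
    using xm by (simp only: butlast_xm_ones last_xm_ones) simp
  also have "\<dots> = (- 1) ^ Suc m" using Suc by simp
  finally show ?case .
qed


lemma qs_sum_list: "qs lam v u w \<noteq> 0 \<Longrightarrow> sum_list w = sum_list v + sum_list u"
proof (induction w arbitrary: v u)
  case Nil then show ?case by (simp split: if_splits)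
next
  case (Cons z w)
  have "(v \<noteq> [] \<and> hd v = z \<and> qs lam (tl v) u w \<noteq> 0) \<or> (u \<noteq> [] \<and> hd u = z \<and> qs lam v (tl u) w \<noteq> 0)
     \<or> (v \<noteq> [] \<and> u \<noteq> [] \<and> hd v + hd u = z \<and> qs lam (tl v) (tl u) w \<noteq> 0)"
    using Cons.prems by (auto split: if_splits)
  then show ?case
  proof (elim disjE conjE)
    assume "v \<noteq> []" "hd v = z" "qs lam (tl v) u w \<noteq> 0"
    then show ?thesis using Cons.IH[of "tl v" u] by (cases v) (auto simp: add.assoc)
  next
    assume "u \<noteq> []" "hd u = z" "qs lam v (tl u) w \<noteq> 0"
    then show ?thesis using Cons.IH[of v "tl u"] by (cases u) (auto simp: add_ac)
  next
    assume "v \<noteq> []" "u \<noteq> []" "hd v + hd u = z" "qs lam (tl v) (tl u) w \<noteq> 0"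
    then show ?thesis using Cons.IH[of "tl v" "tl u"] by (cases v; cases u) (auto simp: add_ac)
  qed
qed

lemma sum_list_empty_ones: "sum_list t = ({#} :: 'x multiset) \<Longrightarrow> t = ones (length t)"
  by (induction t) (auto simp: ones_def)

definition Cm :: "'c::comm_ring_1 \<Rightarrow> 'x multiset \<Rightarrow> nat \<Rightarrow> 'x word \<Rightarrow> 'c" where
  "Cm lam xm m w = (if w \<noteq> [] \<and> hd w = {#} then cf lam xm m (tl w) else 0)"

lemma size_sum_list_cf: "cf lam xm m w \<noteq> 0 \<Longrightarrow> sum_list w = xm"
  using cf_nz by blast

lemma K_basis:
  fixes lam :: "'c::comm_ring_1" and xm :: "'x multiset"
  assumes xm: "size xm = 1" and v: "v \<noteq> []" and u: "u \<noteq> []" and uI: "sum_list (tl u) \<noteq> {#}"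
  shows "pair (basis_prod lam v u) (Cm lam xm m) = (if v = [{#}] then Cm lam xm m u else 0)"
proof -
  have xm0: "xm \<noteq> {#}" using xm by auto
  have e: "pair (basis_prod lam v u) (Cm lam xm m)
      = pair (qs lam (tl v) (tl u)) (\<lambda>w. if hd v + hd u = {#} then cf lam xm m w else 0)"
    by (simp add: bp_eq pair_pre Cm_def cong: if_cong)
  show ?thesis
  proof (cases "hd v + hd u = {#}")
    case False
    then have "(\<lambda>w. if hd v + hd u = {#} then cf lam xm m w else 0) = (\<lambda>w. 0)"
      by (intro ext) auto
    then have "pair (basis_prod lam v u) (Cm lam xm m) = 0" unfolding e by (simp only: pair_zero2')
    moreover have "v = [{#}] \<Longrightarrow> Cm lam xm m u = 0" using False by (simp add: Cm_def)
    ultimately show ?thesis by simp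
  next
    case True
    then have hv: "hd v = {#}" and hu: "hd u = {#}" by auto
    show ?thesis
    proof (cases "sum_list (tl v) = {#}")
      case True
      then have tv: "tl v = ones (length (tl v))" by (rule sum_list_empty_ones)
      have "pair (basis_prod lam v u) (Cm lam xm m) = pair (qs lam (tl v) (tl u)) (cf lam xm m)"
        using hv hu by (simp add: e)
      also have "\<dots> = pair (qs lam (ones (length (tl v))) (tl u)) (cf lam xm m)"
        by (simp only: tv[symmetric])
      also have "\<dots> = (if length (tl v) = 0 then cf lam xm m (tl u) else 0)"
        by (rule pair_good[OF good_cf[OF xm0]])
      also have "\<dots> = (if v = [{#}] then Cm lam xm m u else 0)"
        using v u hv hu by (cases v) (auto simp: Cm_def)
      finally show ?thesis .
    next
      case False
      have "pair (qs lam (tl v) (tl u)) (cf lam xm m) = 0"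
      proof (rule pair_zero2)
        fix w assume "qs lam (tl v) (tl u) w \<noteq> 0"
        then have "sum_list w = sum_list (tl v) + sum_list (tl u)" by (rule qs_sum_list)
        moreover have "0 < size (sum_list (tl v))" "0 < size (sum_list (tl u))"
          using False uI by (simp_all add: nonempty_has_size)
        ultimately have "2 \<le> size (sum_list w)" by simp
        then show "cf lam xm m w = 0" using size_sum_list_cf xm by fastforce
      qed
      moreover have "v \<noteq> [{#}]" using False by auto
      ultimately show ?thesis using hv hu by (simp add: e)
    qed
  qed
qed


lemma pair_bil:
  assumes g: "fs g" and f: "fs f" and b: "\<And>v u. fs (b v u)"
  shows "pair (bil b g f) c = (\<Sum>v\<in>supp g. \<Sum>u\<in>supp f. g v * f u * pair (b v u) c)"
proof -
  define W where "W = (\<Union>v\<in>supp g. \<Union>u\<in>supp f. supp (b v u))"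
  have fW: "finite W" using f g b by (auto simp: W_def)
  have "pair (bil b g f) c = (\<Sum>w\<in>W. bil b g f w * c w)"
    by (rule pair_eq[OF fW]) (use supp_bil[of b g f] in \<open>simp add: W_def\<close>)
  also have "\<dots> = (\<Sum>w\<in>W. \<Sum>v\<in>supp g. \<Sum>u\<in>supp f. g v * f u * (b v u w * c w))"
    unfolding bil_def sum_distrib_right by (simp add: mult_ac)
  also have "\<dots> = (\<Sum>v\<in>supp g. \<Sum>u\<in>supp f. \<Sum>w\<in>W. g v * f u * (b v u w * c w))"
    by (rule swap3[symmetric])
  also have "\<dots> = (\<Sum>v\<in>supp g. \<Sum>u\<in>supp f. g v * f u * pair (b v u) c)"
  proof (intro sum.cong refl)
    fix v u assume "v \<in> supp g" "u \<in> supp f"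
    then have "supp (b v u) \<subseteq> W" by (auto simp: W_def)
    then show "(\<Sum>w\<in>W. g v * f u * (b v u w * c w)) = g v * f u * pair (b v u) c"
      by (simp add: pair_eq[OF fW] sum_distrib_left)
  qed
  finally show ?thesis .
qed

definition Iw :: "'x word set" where
  "Iw = {w. sum_list (tl w) \<noteq> {#}}"

lemma psi_mult:
  fixes lam :: "'c::comm_ring_1" and xm :: "'x multiset"
  assumes xm: "size xm = 1"
    and f: "f \<in> carrier (Sha lam X)" "supp f \<subseteq> Iw" and g: "g \<in> carrier (Sha lam X)"
  shows "pair (bil (basis_prod lam) g f) (Cm lam xm m) = g [{#}] * pair f (Cm lam xm m)"
proof -
  have ff: "fs f" and fg: "fs g" using f g by (auto simp: Sha_carrier)
  have "pair (bil (basis_prod lam) g f) (Cm lam xm m)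
      = (\<Sum>v\<in>supp g. \<Sum>u\<in>supp f. g v * f u * pair (basis_prod lam v u) (Cm lam xm m))"
    by (rule pair_bil[OF fg ff]) simp
  also have "\<dots> = (\<Sum>v\<in>supp g. \<Sum>u\<in>supp f. g v * f u * (if v = [{#}] then Cm lam xm m u else 0))"
  proof (intro sum.cong refl)
    fix v u assume v: "v \<in> supp g" and u: "u \<in> supp f"
    have "v \<noteq> []" "u \<noteq> []" "sum_list (tl u) \<noteq> {#}"
      using v u f g by (auto simp: Sha_carrier sha_basis_def Iw_def)
    then show "g v * f u * pair (basis_prod lam v u) (Cm lam xm m) = g v * f u * (if v = [{#}] then Cm lam xm m u else 0)"
      by (simp add: K_basis[OF xm])
  qed
  also have "\<dots> = (\<Sum>v\<in>supp g. if v = [{#}] then g v * pair f (Cm lam xm m) else 0)"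
    by (intro sum.cong refl) (simp add: pair_def sum_distrib_left mult_ac)
  also have "\<dots> = g [{#}] * pair f (Cm lam xm m)"
    using fg by (simp add: sum.delta) (auto simp: supp_def)
  finally show ?thesis .
qed

lemma ideal_SI:
  fixes lam :: "'c::comm_ring_1" and X :: "'x set"
  assumes sub: "P \<subseteq> carrier (Sha lam X)" and z: "(\<lambda>w. 0) \<in> P"
    and add: "\<And>f g. f \<in> P \<Longrightarrow> g \<in> P \<Longrightarrow> (\<lambda>w. f w + g w) \<in> P"
    and neg: "\<And>f. f \<in> P \<Longrightarrow> (\<lambda>w. - f w) \<in> P"
    and mul: "\<And>f g. f \<in> P \<Longrightarrow> g \<in> carrier (Sha lam X) \<Longrightarrow> bil (basis_prod lam) g f \<in> P"
  shows "ideal P (Sha lam X)"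
proof -
  interpret R: ring "Sha lam X" by (rule ring_Sha)
  have ainv: "\<ominus>\<^bsub>Sha lam X\<^esub> f = (\<lambda>w. - f w)" if "f \<in> carrier (Sha lam X)" for f
  proof (rule R.minus_equality)
    show "(\<lambda>w. - f w) \<oplus>\<^bsub>Sha lam X\<^esub> f = \<zero>\<^bsub>Sha lam X\<^esub>" by (simp add: Sha_add Sha_zero)
    show "f \<in> carrier (Sha lam X)" by fact
    show "(\<lambda>w. - f w) \<in> carrier (Sha lam X)" by (rule Sha_neg_closed[OF that])
  qed
  show ?thesis
  proof (rule idealI[OF ring_Sha])
    show "subgroup P (add_monoid (Sha lam X))"
    proof (rule R.add.subgroupI)
      show "P \<subseteq> carrier (Sha lam X)" by fact
      show "P \<noteq> {}" using z by blast
      show "\<ominus>\<^bsub>Sha lam X\<^esub> a \<in> P" if "a \<in> P" for a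
        using that sub neg ainv by auto
      show "a \<oplus>\<^bsub>Sha lam X\<^esub> b \<in> P" if "a \<in> P" "b \<in> P" for a b
        using that add by (simp add: Sha_add)
    qed
    show "x \<otimes>\<^bsub>Sha lam X\<^esub> a \<in> P" if "a \<in> P" "x \<in> carrier (Sha lam X)" for a x
      using that mul by (simp add: Sha_mult)
    show "a \<otimes>\<^bsub>Sha lam X\<^esub> x \<in> P" if "a \<in> P" "x \<in> carrier (Sha lam X)" for a x
      using that mul bil_comm[of "basis_prod lam" a x, OF bp_comm] by (simp add: Sha_mult)
  qed
qed


theorem theorem3p3:
  fixes lam :: "'c::comm_ring_1" and X :: "'x set"
  assumes "CHAR('c) = 0" and "X \<noteq> {}"
  shows "ring (Sha lam X) \<and> \<not> noetherian_ring (Sha lam X)"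
proof
  show R: "ring (Sha lam X)" by (rule ring_Sha)
  show "\<not> noetherian_ring (Sha lam X)"
  proof
    assume noeth: "noetherian_ring (Sha lam X)"
    interpret R: ring "Sha lam X" by (rule R)
    have one_nz: "(1::'c) \<noteq> 0"
    proof
      assume "(1::'c) = 0"
      then have "of_nat 1 = (0::'c)" by simp
      then have "CHAR('c) dvd 1" by (simp only: of_nat_eq_0_iff_char_dvd)
      then show False using assms(1) by simp
    qed
    obtain x0 where x0: "x0 \<in> X" using assms(2) by blast
    define xm where "xm = {#x0#}"
    have xm1: "size xm = 1" by (simp add: xm_def)
    have xm0: "xm \<noteq> {#}" by (simp add: xm_def)
    define Iset where "Iset = {f \<in> carrier (Sha lam X). supp f \<subseteq> Iw}"
    have Iset_sub: "Iset \<subseteq> carrier (Sha lam X)" by (auto simp: Iset_def)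
    have mulI: "bil (basis_prod lam) g f \<in> Iset" if "f \<in> Iset" "g \<in> carrier (Sha lam X)" for f g
    proof -
      have fc: "f \<in> carrier (Sha lam X)" and fI: "supp f \<subseteq> Iw" using that by (auto simp: Iset_def)
      have "bil (basis_prod lam) g f \<in> carrier (Sha lam X)" using carrier_mult[OF that(2) fc] .
      moreover have "supp (bil (basis_prod lam) g f) \<subseteq> Iw"
      proof
        fix w assume "w \<in> supp (bil (basis_prod lam) g f)"
        then obtain v u where u: "u \<in> supp f" and w: "w \<in> supp (basis_prod lam v u)"
          using supp_bil[of "basis_prod lam" g f] by blast
        from w obtain t where t: "w = (hd v + hd u) # t" "qs lam (tl v) (tl u) t \<noteq> 0"
          by (auto simp: supp_def bp_eq pre_def split: list.splits if_splits)
        have "sum_list t = sum_list (tl v) + sum_list (tl u)" by (rule qs_sum_list[OF t(2)])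
        moreover have "sum_list (tl u) \<noteq> {#}" using u fI by (auto simp: Iw_def)
        ultimately show "w \<in> Iw" using t(1) by (simp add: Iw_def)
      qed
      ultimately show ?thesis by (simp add: Iset_def)
    qed
    have idI: "ideal Iset (Sha lam X)"
    proof (rule ideal_SI[OF Iset_sub])
      show "(\<lambda>w. 0) \<in> Iset" by (simp add: Iset_def Sha_carrier supp_def)
      show "(\<lambda>w. f w + g w) \<in> Iset" if "f \<in> Iset" "g \<in> Iset" for f g
        using that Sha_add_closed[of f lam X g] supp_add[of f g] by (auto simp: Iset_def Sha_add)
      show "(\<lambda>w. - f w) \<in> Iset" if "f \<in> Iset" for f
        using that Sha_neg_closed[of f lam X] by (auto simp: Iset_def supp_def)
      show "bil (basis_prod lam) g f \<in> Iset" if "f \<in> Iset" "g \<in> carrier (Sha lam X)" for f g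
        by (rule mulI[OF that])
    qed
    obtain A where A: "A \<subseteq> carrier (Sha lam X)" "finite A" "Iset = genideal (Sha lam X) A"
      using noetherian_ring.finetely_gen[OF noeth idI] by blast
    define Wd where "Wd = (\<Union>a\<in>A. supp a)"
    have fWd: "finite Wd" using A by (auto simp: Wd_def Sha_carrier)
    define m where "m = Max (insert 0 (length ` Wd))"
    have mlen: "length w \<le> m" if "w \<in> Wd" for w
      using that fWd by (auto simp: m_def)
    define Mset where "Mset = {f \<in> Iset. pair f (Cm lam xm m) = 0}"
    have idM: "ideal Mset (Sha lam X)"
    proof (rule ideal_SI)
      show "Mset \<subseteq> carrier (Sha lam X)" using Iset_sub by (auto simp: Mset_def)
      show "(\<lambda>w. 0) \<in> Mset" by (simp add: Mset_def Iset_def Sha_carrier supp_def pair_def)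
      show "(\<lambda>w. f w + g w) \<in> Mset" if "f \<in> Mset" "g \<in> Mset" for f g
      proof -
        have "f \<in> Iset" "g \<in> Iset" "fs f" "fs g" using that by (auto simp: Mset_def Iset_def Sha_carrier)
        moreover have "pair f (Cm lam xm m) = 0" "pair g (Cm lam xm m) = 0" using that by (auto simp: Mset_def)
        ultimately show ?thesis
          using Sha_add_closed[of f lam X g] supp_add[of f g]
          by (auto simp: Mset_def Iset_def Sha_add pair_add_fun)
      qed
      show "(\<lambda>w. - f w) \<in> Mset" if "f \<in> Mset" for f
      proof -
        have "f \<in> Iset" "fs f" "pair f (Cm lam xm m) = 0" using that by (auto simp: Mset_def Iset_def Sha_carrier)
        moreover have "pair (\<lambda>w. - f w) (Cm lam xm m) = - pair f (Cm lam xm m)"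
          by (simp add: pair_def supp_def sum_negf)
        ultimately show ?thesis
          using Sha_neg_closed[of f lam X] by (auto simp: Mset_def Iset_def supp_def)
      qed
      show "bil (basis_prod lam) g f \<in> Mset" if "f \<in> Mset" "g \<in> carrier (Sha lam X)" for f g
      proof -
        have fI: "f \<in> Iset" and p0: "pair f (Cm lam xm m) = 0" using that by (auto simp: Mset_def)
        have "pair (bil (basis_prod lam) g f) (Cm lam xm m) = g [{#}] * pair f (Cm lam xm m)"
          using fI that(2) by (intro psi_mult[OF xm1]) (auto simp: Iset_def)
        then show ?thesis using mulI[OF fI that(2)] p0 by (simp add: Mset_def)
      qed
    qed
    have AM: "A \<subseteq> Mset"
    proof
      fix a assume aA: "a \<in> A"
      have "a \<in> Iset" using aA A(1) R.genideal_self[OF A(1)] A(3) by blast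
      moreover have "pair a (Cm lam xm m) = 0"
      proof (rule pair_zero2)
        fix w assume "a w \<noteq> 0"
        then have "w \<in> Wd" using aA by (auto simp: Wd_def supp_def)
        then have "length (tl w) \<le> m" using mlen by fastforce
        then show "Cm lam xm m w = 0" by (simp add: Cm_def cf_short)
      qed
      ultimately show "a \<in> Mset" by (simp add: Mset_def)
    qed
    have IM: "Iset \<subseteq> Mset" using R.genideal_minimal[OF idM AM] A(3) by simp
    define e where "e = (dl ({#} # xm # ones m) :: 'x word \<Rightarrow> 'c)"
    have eword: "{#} # xm # ones m \<in> sha_basis X"
      using x0 by (auto simp: sha_basis_def xm_def ones_def)
    have eI: "e \<in> Iset"
    proof -
      have "supp e \<subseteq> {{#} # xm # ones m}" unfolding e_def by (rule supp_dl)
      moreover have "{#} # xm # ones m \<in> Iw"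
        using xm0 by (simp add: Iw_def ones_def)
      ultimately show ?thesis
        using eword by (auto simp: Iset_def Sha_carrier intro: finite_subset)
    qed
    have "pair e (Cm lam xm m) = cf lam xm m (xm # ones m)"
      by (simp add: e_def pair_dl Cm_def)
    also have "\<dots> = (- 1) ^ m" by (rule cf_val[OF xm0])
    finally have pe: "pair e (Cm lam xm m) = (- 1) ^ m" .
    have "(- 1 :: 'c) ^ m \<noteq> 0"
    proof
      assume "(- 1 :: 'c) ^ m = 0"
      then have "(- 1 :: 'c) ^ m * (- 1) ^ m = 0" by simp
      moreover have "(- 1 :: 'c) ^ m * (- 1) ^ m = 1"
        by (simp flip: power_mult_distrib)
      ultimately show False using one_nz by simp
    qed
    moreover have "pair e (Cm lam xm m) = 0" using eI IM by (auto simp: Mset_def)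
    ultimately show False using pe by simp
  qed
qed


end
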